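(* Let $G\subset\mathbb{R}^2$ be a bounded $C^2$-domain and $x_0\in\overline{G}$. Then there is a relatively open set $W\subset\overline{G}$ containing $x_0$ such that whenever $K\subset W$ is compact, $V$ is an open neighbourhood of $K$ in $W$ and $\eta\in(0,\frac12)$, there exist $\varphi\in C^2(\overline{G})$ and $C_\varphi>0$ such that \[ 0\le\varphi\le1\text{ in }\overline{G},\quad \varphi=0\text{ in }\overline{G}\setminus V,\quad \varphi=1\text{ in }K,\quad \partial_\nu\varphi=0\text{ on }\partial G, \] and \[ |\nabla\varphi|\le C_\varphi\varphi^{1-\eta}\quad\text{and}\quad|\Delta\varphi|\le C_\varphi\varphi^{1-2\eta}\qquad\text{in }\overline{G}. \]
   Context: $\nu$ denotes the outer unit normal on $\partial G$. *)

theory Defs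
  imports "HOL-Analysis.Analysis"
begin

definition partial :: "2 \<Rightarrow> (real^2 \<Rightarrow> real) \<Rightarrow> real^2 \<Rightarrow> real" where
  "partial i f x = frechet_derivative f (at x) (axis i 1)"

definition grad :: "(real^2 \<Rightarrow> real) \<Rightarrow> real^2 \<Rightarrow> real^2" where
  "grad f x = (\<chi> i. partial i f x)"

definition laplacian :: "(real^2 \<Rightarrow> real) \<Rightarrow> real^2 \<Rightarrow> real" where
  "laplacian f x = (\<Sum>i\<in>UNIV. partial i (partial i f) x)"

definition C2_on :: "(real^2) set \<Rightarrow> (real^2 \<Rightarrow> real) \<Rightarrow> bool" where
  "C2_on U f \<longleftrightarrow>
     (\<forall>x\<in>U. f differentiable (at x)) \<and>
     (\<forall>i. \<forall>x\<in>U. partial i f differentiable (at x)) \<and>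
     (\<forall>i j. continuous_on U (partial j (partial i f)))"

definition C2_closure :: "(real^2) set \<Rightarrow> (real^2 \<Rightarrow> real) \<Rightarrow> bool" where
  "C2_closure G f \<longleftrightarrow> (\<exists>U. open U \<and> closure G \<subseteq> U \<and> C2_on U f)"

definition C2_real :: "(real \<Rightarrow> real) \<Rightarrow> bool" where
  "C2_real h \<longleftrightarrow> (\<exists>h' h''. (\<forall>t. (h has_real_derivative h' t) (at t)) \<and>
                          (\<forall>t. (h' has_real_derivative h'' t) (at t)) \<and>
                          continuous_on UNIV h'')"

definition C2_domain :: "(real^2) set \<Rightarrow> bool" where
  "C2_domain G \<longleftrightarrow> open G \<and> connected G \<and> G \<noteq> {} \<and>
     (\<forall>p\<in>frontier G. \<exists>r>0. \<exists>(Q::real^2 \<Rightarrow> real^2) h. orthogonal_transformation Q \<and> C2_real h \<and>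
        G \<inter> ball p r = {x \<in> ball p r. (Q (x - p)) $ 2 < h ((Q (x - p)) $ 1)})"

text \<open>Outer unit normal at a boundary point p: a unit vector orthogonal to the boundary
  at p (in the sense of the tangent condition) pointing out of G.\<close>
definition outer_normal :: "(real^2) set \<Rightarrow> real^2 \<Rightarrow> real^2" where
  "outer_normal G p = (SOME n. norm n = 1 \<and>
      ((\<lambda>q. ((q - p) \<bullet> n) / norm (q - p)) \<longlongrightarrow> 0) (at p within frontier G) \<and>
      (\<exists>e>0. \<forall>t. 0 < t \<and> t < e \<longrightarrow> p - t *\<^sub>R n \<in> G))"

end

theory Submission
  imports Defs
begin

definition C2d :: "(real^2 \<Rightarrow> real) \<Rightarrow> (real^2 \<Rightarrow> real^2) \<Rightarrow> (real^2 \<Rightarrow> 2 \<Rightarrow> real^2) \<Rightarrow> bool" where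
"C2d f g H \<longleftrightarrow> (\<forall>x. (f has_derivative (\<lambda>v. g x \<bullet> v)) (at x)) \<and>
   (\<forall>x i. ((\<lambda>y. g y $ i) has_derivative (\<lambda>v. H x i \<bullet> v)) (at x)) \<and>
   (\<forall>i. continuous_on UNIV (\<lambda>x. H x i))"

definition C2r :: "(real\<Rightarrow>real) \<Rightarrow> (real\<Rightarrow>real) \<Rightarrow> (real\<Rightarrow>real) \<Rightarrow> bool" where
"C2r p p1 p2 \<longleftrightarrow> (\<forall>t. (p has_real_derivative p1 t) (at t)) \<and> (\<forall>t. (p1 has_real_derivative p2 t) (at t)) \<and> continuous_on UNIV p2"

lemma C2d_cont_f: "C2d f g H \<Longrightarrow> continuous_on UNIV f"
  unfolding C2d_def
  by (auto intro!: continuous_at_imp_continuous_on has_derivative_continuous)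

lemma C2d_cont_gi: "C2d f g H \<Longrightarrow> continuous_on UNIV (\<lambda>x. g x $ i)"
  unfolding C2d_def
  by (auto intro!: continuous_at_imp_continuous_on has_derivative_continuous)

lemma C2d_cont_g: "C2d f g H \<Longrightarrow> continuous_on UNIV g"
proof -
  assume a: "C2d f g H"
  have "continuous_on UNIV (\<lambda>x. \<chi> i. g x $ i)"
    by (intro continuous_on_vec_lambda C2d_cont_gi[OF a])
  then show ?thesis by simp
qed

lemma C2d_partial: "C2d f g H \<Longrightarrow> partial i f = (\<lambda>x. g x $ i)"
  unfolding partial_def
proof (intro ext)
  fix x assume "C2d f g H"
  then have E: "(\<lambda>v. g x \<bullet> v) = frechet_derivative f (at x)"
    unfolding C2d_def by (intro frechet_derivative_at) blast
  show "frechet_derivative f (at x) (axis i 1) = g x $ i"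
    unfolding E[symmetric] by (simp add: inner_axis)
qed

lemma C2d_partial2: "C2d f g H \<Longrightarrow> partial j (partial i f) x = H x i $ j"
proof -
  assume a: "C2d f g H"
  have E: "(\<lambda>v. H x i \<bullet> v) = frechet_derivative (\<lambda>y. g y $ i) (at x)"
    using a unfolding C2d_def by (intro frechet_derivative_at) blast
  show ?thesis unfolding C2d_partial[OF a] partial_def E[symmetric]
    by (simp add: inner_axis)
qed

lemma C2d_grad: assumes "C2d f g H" shows "grad f x = g x"
  unfolding grad_def C2d_partial[OF assms] by (simp add: vec_eq_iff)

lemma C2d_lap: assumes "C2d f g H" shows "laplacian f x = (\<Sum>i\<in>UNIV. H x i $ i)"
  unfolding laplacian_def C2d_partial2[OF assms] by simp

lemma C2d_C2_on: assumes a: "C2d f g H" shows "C2_on U f"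
proof -
  have d: "\<And>x. (f has_derivative (\<lambda>v. g x \<bullet> v)) (at x)"
    and d2: "\<And>x i. ((\<lambda>y. g y $ i) has_derivative (\<lambda>v. H x i \<bullet> v)) (at x)"
    and c: "\<And>i. continuous_on UNIV (\<lambda>x. H x i)"
    using a unfolding C2d_def by auto
  have "continuous_on U (\<lambda>x. H x i $ j)" for i j
    using continuous_on_subset[OF continuous_on_component[OF c[of i]], of U j] by simp
  moreover have "partial j (partial i f) = (\<lambda>x. H x i $ j)" for i j
    using C2d_partial2[OF a] by auto
  ultimately show ?thesis unfolding C2_on_def C2d_partial[OF a]
    using differentiableI[OF d] differentiableI[OF d2] by auto
qed

lemma inner_zero_fun: "(\<bullet>) (0::'a::real_inner) = (\<lambda>v. 0)"
  by (rule ext) simp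

lemma C2d_const: "C2d (\<lambda>x. c) (\<lambda>x. 0) (\<lambda>x i. 0)"
  unfolding C2d_def by (simp add: has_derivative_const inner_zero_fun)

lemma C2d_lin: "C2d (\<lambda>x. a \<bullet> x + c) (\<lambda>x. a) (\<lambda>x i. 0)"
proof -
  have "((\<lambda>x. a \<bullet> x + c) has_derivative (\<lambda>v. a \<bullet> v + 0)) (at x)" for x
    by (intro has_derivative_add bounded_linear_imp_has_derivative bounded_linear_inner_right
        has_derivative_const)
  then show ?thesis unfolding C2d_def by (simp add: has_derivative_const inner_zero_fun)
qed

lemma C2d_add:
  assumes a: "C2d f gf Hf" and b: "C2d g gg Hg"
  shows "C2d (\<lambda>x. f x + g x) (\<lambda>x. gf x + gg x) (\<lambda>x i. Hf x i + Hg x i)"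
  unfolding C2d_def
proof (intro conjI allI)
  fix x
  have "((\<lambda>x. f x + g x) has_derivative (\<lambda>v. gf x \<bullet> v + gg x \<bullet> v)) (at x)"
    using a b unfolding C2d_def by (intro has_derivative_add) auto
  then show "((\<lambda>x. f x + g x) has_derivative (\<lambda>v. (gf x + gg x) \<bullet> v)) (at x)"
    by (simp add: inner_add_left)
next
  fix x i
  have "((\<lambda>y. gf y $ i + gg y $ i) has_derivative (\<lambda>v. Hf x i \<bullet> v + Hg x i \<bullet> v)) (at x)"
    using a b unfolding C2d_def by (intro has_derivative_add) auto
  then show "((\<lambda>y. (gf y + gg y) $ i) has_derivative (\<lambda>v. (Hf x i + Hg x i) \<bullet> v)) (at x)"
    by (simp add: inner_add_left)
next
  fix i
  show "continuous_on UNIV (\<lambda>x. Hf x i + Hg x i)"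
    using a b unfolding C2d_def by (intro continuous_on_add) auto
qed

lemma C2d_mult:
  assumes a: "C2d f gf Hf" and b: "C2d g gg Hg"
  shows "C2d (\<lambda>x. f x * g x) (\<lambda>x. f x *\<^sub>R gg x + g x *\<^sub>R gf x)
     (\<lambda>x i. (gg x $ i) *\<^sub>R gf x + f x *\<^sub>R Hg x i + (gf x $ i) *\<^sub>R gg x + g x *\<^sub>R Hf x i)"
  unfolding C2d_def
proof (intro conjI allI)
  fix x
  have "((\<lambda>x. f x * g x) has_derivative (\<lambda>v. f x * (gg x \<bullet> v) + (gf x \<bullet> v) * g x)) (at x)"
    using a b unfolding C2d_def by (intro has_derivative_mult) auto
  then show "((\<lambda>x. f x * g x) has_derivative (\<lambda>v. (f x *\<^sub>R gg x + g x *\<^sub>R gf x) \<bullet> v)) (at x)"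
    by (rule has_derivative_eq_rhs) (simp add: fun_eq_iff inner_add_left)
next
  fix x i
  have e: "(\<lambda>y. (f y *\<^sub>R gg y + g y *\<^sub>R gf y) $ i) = (\<lambda>y. f y * gg y $ i + g y * gf y $ i)"
    by simp
  have "((\<lambda>y. f y * gg y $ i + g y * gf y $ i) has_derivative
     (\<lambda>v. f x * (Hg x i \<bullet> v) + (gf x \<bullet> v) * gg x $ i + (g x * (Hf x i \<bullet> v) + (gg x \<bullet> v) * gf x $ i))) (at x)"
    using a b unfolding C2d_def by (intro has_derivative_add has_derivative_mult) auto
  then show "((\<lambda>y. (f y *\<^sub>R gg y + g y *\<^sub>R gf y) $ i) has_derivative
      (\<lambda>v. ((gg x $ i) *\<^sub>R gf x + f x *\<^sub>R Hg x i + (gf x $ i) *\<^sub>R gg x + g x *\<^sub>R Hf x i) \<bullet> v)) (at x)"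
    unfolding e by (rule has_derivative_eq_rhs) (simp add: fun_eq_iff inner_add_left)
next
  fix i
  have h1: "continuous_on UNIV (\<lambda>x. Hf x i)" and h2: "continuous_on UNIV (\<lambda>x. Hg x i)"
    using a b unfolding C2d_def by auto
  show "continuous_on UNIV (\<lambda>x. (gg x $ i) *\<^sub>R gf x + f x *\<^sub>R Hg x i + (gf x $ i) *\<^sub>R gg x + g x *\<^sub>R Hf x i)"
    by (intro continuous_on_add continuous_on_scaleR C2d_cont_f[OF a] C2d_cont_f[OF b] C2d_cont_g[OF a] C2d_cont_g[OF b]
      C2d_cont_gi[OF a] C2d_cont_gi[OF b] h1 h2)
qed

lemma C2d_comp:
  assumes p: "C2r p p1 p2" and a: "C2d f g H"
  shows "C2d (\<lambda>x. p (f x)) (\<lambda>x. p1 (f x) *\<^sub>R g x) (\<lambda>x i. (p2 (f x) * g x $ i) *\<^sub>R g x + p1 (f x) *\<^sub>R H x i)"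
  unfolding C2d_def
proof (intro conjI allI)
  fix x
  have "((\<lambda>x. p (f x)) has_derivative (\<lambda>v. (g x \<bullet> v) * p1 (f x))) (at x)"
    using p a unfolding C2d_def C2r_def by (intro DERIV_compose_FDERIV) auto
  then show "((\<lambda>x. p (f x)) has_derivative (\<lambda>v. (p1 (f x) *\<^sub>R g x) \<bullet> v)) (at x)"
    by (simp add: mult.commute)
next
  fix x i
  have d1: "((\<lambda>x. p1 (f x)) has_derivative (\<lambda>v. (g x \<bullet> v) * p2 (f x))) (at x)"
    using p a unfolding C2d_def C2r_def by (intro DERIV_compose_FDERIV) auto
  have e: "(\<lambda>y. (p1 (f y) *\<^sub>R g y) $ i) = (\<lambda>y. p1 (f y) * g y $ i)" by simp
  have "((\<lambda>y. p1 (f y) * g y $ i) has_derivative (\<lambda>v. p1 (f x) * (H x i \<bullet> v) + ((g x \<bullet> v) * p2 (f x)) * g x $ i)) (at x)"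
    using a d1 unfolding C2d_def by (intro has_derivative_mult) auto
  then show "((\<lambda>y. (p1 (f y) *\<^sub>R g y) $ i) has_derivative
      (\<lambda>v. ((p2 (f x) * g x $ i) *\<^sub>R g x + p1 (f x) *\<^sub>R H x i) \<bullet> v)) (at x)"
    unfolding e by (rule has_derivative_eq_rhs) (simp add: fun_eq_iff inner_add_left)
next
  fix i
  have c2: "continuous_on UNIV (\<lambda>x. p2 (f x))"
  proof -
    have "continuous_on UNIV p2" using p unfolding C2r_def by blast
    from continuous_on_compose2[OF this C2d_cont_f[OF a] subset_UNIV] show ?thesis .
  qed
  have c1: "continuous_on UNIV (\<lambda>x. p1 (f x))"
  proof -
    have "continuous_on UNIV p1" using p unfolding C2r_def
      by (intro continuous_at_imp_continuous_on ballI DERIV_isCont) blast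
    from continuous_on_compose2[OF this C2d_cont_f[OF a] subset_UNIV] show ?thesis .
  qed
  have h: "continuous_on UNIV (\<lambda>x. H x i)" using a unfolding C2d_def by auto
  show "continuous_on UNIV (\<lambda>x. (p2 (f x) * g x $ i) *\<^sub>R g x + p1 (f x) *\<^sub>R H x i)"
    by (intro continuous_on_add continuous_on_scaleR continuous_on_mult c1 c2 C2d_cont_g[OF a] C2d_cont_gi[OF a] h)
qed

lemma C2d_sum:
  assumes "finite I" "\<And>i. i \<in> I \<Longrightarrow> C2d (f i) (g i) (H i)"
  shows "C2d (\<lambda>x. \<Sum>i\<in>I. f i x) (\<lambda>x. \<Sum>i\<in>I. g i x) (\<lambda>x j. \<Sum>i\<in>I. H i x j)"
  using assms
proof (induction I rule: finite_induct)
  case empty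
  then show ?case using C2d_const[of 0] by simp
next
  case (insert a I)
  have "C2d (\<lambda>x. f a x + (\<Sum>i\<in>I. f i x)) (\<lambda>x. g a x + (\<Sum>i\<in>I. g i x)) (\<lambda>x j. H a x j + (\<Sum>i\<in>I. H i x j))"
    using insert by (intro C2d_add) auto
  then show ?case using insert by (simp add: sum.insert)
qed

definition clamp :: "real \<Rightarrow> real" where "clamp t = max 0 (min 1 t)"

lemma deriv_glue:
  fixes f g k :: "real \<Rightarrow> real"
  assumes dg: "(g has_real_derivative D) (at x)" and dk: "(k has_real_derivative D) (at x)"
    and el: "\<forall>\<^sub>F y in at_left x. f y = g y" and er: "\<forall>\<^sub>F y in at_right x. f y = k y"
    and fg: "f x = g x" and fk: "f x = k x"
  shows "(f has_real_derivative D) (at x)"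
proof -
  have g: "((\<lambda>y. (g y - g x) / (y - x)) \<longlongrightarrow> D) (at x)"
    using dg unfolding has_field_derivative_iff .
  have k: "((\<lambda>y. (k y - k x) / (y - x)) \<longlongrightarrow> D) (at x)"
    using dk unfolding has_field_derivative_iff .
  have "((\<lambda>y. (f y - f x) / (y - x)) \<longlongrightarrow> D) (at_left x)"
  proof (rule Lim_transform_eventually)
    show "((\<lambda>y. (g y - g x) / (y - x)) \<longlongrightarrow> D) (at_left x)"
      using g filterlim_at_split by blast
    show "\<forall>\<^sub>F y in at_left x. (g y - g x) / (y - x) = (f y - f x) / (y - x)"
      using el by eventually_elim (simp add: fg)
  qed
  moreover have "((\<lambda>y. (f y - f x) / (y - x)) \<longlongrightarrow> D) (at_right x)"
  proof (rule Lim_transform_eventually)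
    show "((\<lambda>y. (k y - k x) / (y - x)) \<longlongrightarrow> D) (at_right x)"
      using k filterlim_at_split by blast
    show "\<forall>\<^sub>F y in at_right x. (k y - k x) / (y - x) = (f y - f x) / (y - x)"
      using er by eventually_elim (simp add: fk)
  qed
  ultimately show ?thesis unfolding has_field_derivative_iff using filterlim_at_split by blast
qed

lemma clamp_deriv:
  fixes P P' :: "real \<Rightarrow> real"
  assumes d: "\<And>t. (P has_real_derivative P' t) (at t)" and z0: "P' 0 = 0" and z1: "P' 1 = 0"
  shows "((\<lambda>t. P (clamp t)) has_real_derivative P' (clamp t)) (at t)"
proof -
  consider "t < 0" | "t = 0" | "0 < t \<and> t < 1" | "t = 1" | "1 < t" by linarith
  then show ?thesis
  proof cases
    case 1
    have ev: "\<forall>\<^sub>F y in nhds t. P (clamp y) = P 0"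
      using eventually_nhds_in_open[of "{..<0}" t] 1
      by (auto elim!: eventually_mono simp: clamp_def)
    have "((\<lambda>y. P 0) has_real_derivative 0) (at t)" by (rule DERIV_const)
    then show ?thesis using 1 z0 by (subst DERIV_cong_ev[OF refl ev]) (auto simp: clamp_def)
  next
    case 3
    have ev: "\<forall>\<^sub>F y in nhds t. P (clamp y) = P y"
      using eventually_nhds_in_open[of "{0<..<1}" t] 3
      by (auto elim!: eventually_mono simp: clamp_def)
    then show ?thesis using 3 d[of t] by (subst DERIV_cong_ev[OF refl ev]) (auto simp: clamp_def)
  next
    case 5
    have ev: "\<forall>\<^sub>F y in nhds t. P (clamp y) = P 1"
      using eventually_nhds_in_open[of "{1<..}" t] 5
      by (auto elim!: eventually_mono simp: clamp_def)
    have "((\<lambda>y. P 1) has_real_derivative 0) (at t)" by (rule DERIV_const)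
    then show ?thesis using 5 z1 by (subst DERIV_cong_ev[OF refl ev]) (auto simp: clamp_def)
  next
    case 2
    have "((\<lambda>t. P (clamp t)) has_real_derivative 0) (at 0)"
    proof (rule deriv_glue[where g="\<lambda>y. P 0" and k=P])
      show "((\<lambda>y. P 0) has_real_derivative 0) (at 0)" by (rule DERIV_const)
      show "(P has_real_derivative 0) (at 0)" using d[of 0] z0 by simp
      show "\<forall>\<^sub>F y in at_left 0. P (clamp y) = P 0"
      proof -
        have "\<forall>\<^sub>F y in at_left (0::real). y \<in> {-1<..<0}" by (rule eventually_at_left_real) simp
        then show ?thesis by eventually_elim (auto simp: clamp_def)
      qed
      show "\<forall>\<^sub>F y in at_right 0. P (clamp y) = P y"
      proof -
        have "\<forall>\<^sub>F y in at_right (0::real). y \<in> {0<..<1}" by (rule eventually_at_right_real) simp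
        then show ?thesis by eventually_elim (auto simp: clamp_def)
      qed
    qed (auto simp: clamp_def)
    then show ?thesis using 2 z0 by (simp add: clamp_def)
  next
    case 4
    have "((\<lambda>t. P (clamp t)) has_real_derivative 0) (at 1)"
    proof (rule deriv_glue[where g="P" and k="\<lambda>y. P 1"])
      show "((\<lambda>y. P 1) has_real_derivative 0) (at 1)" by (rule DERIV_const)
      show "(P has_real_derivative 0) (at 1)" using d[of 1] z1 by simp
      show "\<forall>\<^sub>F y in at_left 1. P (clamp y) = P y"
      proof -
        have "\<forall>\<^sub>F y in at_left (1::real). y \<in> {0<..<1}" by (rule eventually_at_left_real) simp
        then show ?thesis by eventually_elim (auto simp: clamp_def)
      qed
      show "\<forall>\<^sub>F y in at_right 1. P (clamp y) = P 1"
      proof -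
        have "\<forall>\<^sub>F y in at_right (1::real). y \<in> {1<..<2}" by (rule eventually_at_right_real) simp
        then show ?thesis by eventually_elim (auto simp: clamp_def)
      qed
    qed (auto simp: clamp_def)
    then show ?thesis using 4 z1 by (simp add: clamp_def)
  qed
qed

lemma continuous_clamp: "continuous_on UNIV clamp"
  unfolding clamp_def by (intro continuous_intros)

definition P0 :: "real \<Rightarrow> real" where "P0 t = 10*t^3 - 15*t^4 + 6*t^5"
definition P1 :: "real \<Rightarrow> real" where "P1 t = 30*t^2 - 60*t^3 + 30*t^4"
definition P2 :: "real \<Rightarrow> real" where "P2 t = 60*t - 180*t^2 + 120*t^3"

lemma P0_deriv: "(P0 has_real_derivative P1 t) (at t)"
  unfolding P0_def P1_def by (auto intro!: derivative_eq_intros simp: algebra_simps)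
lemma P1_deriv: "(P1 has_real_derivative P2 t) (at t)"
  unfolding P2_def P1_def by (auto intro!: derivative_eq_intros simp: algebra_simps)

definition S0 :: "real \<Rightarrow> real" where "S0 t = P0 (clamp t)"
definition S1 :: "real \<Rightarrow> real" where "S1 t = P1 (clamp t)"
definition S2 :: "real \<Rightarrow> real" where "S2 t = P2 (clamp t)"

lemma C2r_S0: "C2r S0 S1 S2"
  unfolding C2r_def
proof (intro conjI allI)
  fix t
  show "(S0 has_real_derivative S1 t) (at t)"
    unfolding S0_def[abs_def] S1_def by (rule clamp_deriv[OF P0_deriv]) (simp_all add: P1_def)
  show "(S1 has_real_derivative S2 t) (at t)"
    unfolding S1_def[abs_def] S2_def by (rule clamp_deriv[OF P1_deriv]) (simp_all add: P2_def)
next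
  show "continuous_on UNIV S2"
    unfolding S2_def[abs_def] P2_def by (intro continuous_intros continuous_clamp)
qed

lemma S0_le0: "t \<le> 0 \<Longrightarrow> S0 t = 0"
  by (simp add: S0_def P0_def clamp_def)
lemma S0_ge1: "1 \<le> t \<Longrightarrow> S0 t = 1"
  by (simp add: S0_def P0_def clamp_def)
lemma S1_le0: "t \<le> 0 \<Longrightarrow> S1 t = 0"
  by (simp add: S1_def P1_def clamp_def)

lemma S0_range: "0 \<le> S0 t \<and> S0 t \<le> 1"
proof -
  define c where "c = clamp t"
  have c: "0 \<le> c" "c \<le> 1" unfolding c_def clamp_def by auto
  have e: "P0 c = c^3 * (10 - 15*c + 6*c^2)" unfolding P0_def by (simp add: algebra_simps power_def)
  have a: "0 \<le> 10 - 15*c + 6*c^2"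
  proof -
    have "0 \<le> 6*(c - 5/4)^2 + (10 - 6*25/16)" by (intro add_nonneg_nonneg) auto
    also have "\<dots> = 10 - 15*c + 6*c^2" by (simp add: power2_eq_square algebra_simps)
    finally show ?thesis .
  qed
  have "0 \<le> P0 c" unfolding e using a c by simp
  moreover have "1 - P0 c = (1 - c)^3 * (1 + 3*c + 6*c^2)"
    unfolding P0_def by (simp add: algebra_simps power_def)
  then have "0 \<le> 1 - P0 c" using c by (metis add_nonneg_nonneg mult_nonneg_nonneg zero_le_power diff_ge_0_iff_ge
        zero_le_one mult_nonneg_nonneg zero_le_numeral zero_le_power2 power2_eq_square)
  ultimately show ?thesis unfolding S0_def c_def by simp
qed

lemma C2r_pow: "C2r (\<lambda>t. t ^ k) (\<lambda>t. real k * t ^ (k - 1)) (\<lambda>t. real k * real (k - 1) * t ^ (k - 1 - 1))"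
  unfolding C2r_def
proof (intro conjI allI)
  fix t :: real
  show "((\<lambda>t. t ^ k) has_real_derivative real k * t ^ (k - 1)) (at t)"
    using DERIV_pow[of k t] by simp
  show "((\<lambda>t. real k * t ^ (k - 1)) has_real_derivative real k * real (k - 1) * t ^ (k - 1 - 1)) (at t)"
    using DERIV_cmult[OF DERIV_pow[of "k-1" t], of "real k"] by (simp add: mult.assoc)
next
  show "continuous_on UNIV (\<lambda>t. real k * real (k - 1) * t ^ (k - 1 - 1))"
    by (intro continuous_intros)
qed

definition C2e :: "(real^2 \<Rightarrow> real) \<Rightarrow> bool" where "C2e f \<longleftrightarrow> (\<exists>g H. C2d f g H)"

definition C2N :: "((real^2) \<times> (real^2)) set \<Rightarrow> (real^2 \<Rightarrow> real) \<Rightarrow> bool" where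
  "C2N A f \<longleftrightarrow> C2e f \<and> (\<forall>p\<in>A. frechet_derivative f (at (fst p)) (snd p) = 0)"

lemma C2d_fd: "C2d f g H \<Longrightarrow> frechet_derivative f (at y) n = g y \<bullet> n"
proof -
  assume a: "C2d f g H"
  have "(\<lambda>v. g y \<bullet> v) = frechet_derivative f (at y)"
    using a unfolding C2d_def by (intro frechet_derivative_at) blast
  then show ?thesis by metis
qed

lemma C2N_const: "C2N A (\<lambda>x. c)"
  unfolding C2N_def C2e_def using C2d_fd[OF C2d_const] C2d_const by auto

lemma C2N_lin: "C2N A (\<lambda>x. a) \<Longrightarrow> True" by simp

lemma C2N_add: assumes "C2N A f" "C2N A g" shows "C2N A (\<lambda>x. f x + g x)"
proof -
  obtain gf Hf gg Hg where a: "C2d f gf Hf" and b: "C2d g gg Hg"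
    using assms unfolding C2N_def C2e_def by blast
  have c: "C2d (\<lambda>x. f x + g x) (\<lambda>x. gf x + gg x) (\<lambda>x i. Hf x i + Hg x i)" by (rule C2d_add[OF a b])
  show ?thesis unfolding C2N_def C2e_def
    using c assms unfolding C2N_def C2d_fd[OF c] C2d_fd[OF a] C2d_fd[OF b]
    by (auto simp: inner_add_left)
qed

lemma C2N_mult: assumes "C2N A f" "C2N A g" shows "C2N A (\<lambda>x. f x * g x)"
proof -
  obtain gf Hf gg Hg where a: "C2d f gf Hf" and b: "C2d g gg Hg"
    using assms unfolding C2N_def C2e_def by blast
  note c = C2d_mult[OF a b]
  show ?thesis unfolding C2N_def C2e_def
    using c assms unfolding C2N_def C2d_fd[OF c] C2d_fd[OF a] C2d_fd[OF b]
    by (auto simp: inner_add_left)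
qed

lemma C2N_comp: assumes p: "C2r p p1 p2" and "C2N A f" shows "C2N A (\<lambda>x. p (f x))"
proof -
  obtain gf Hf where a: "C2d f gf Hf"
    using assms unfolding C2N_def C2e_def by blast
  note c = C2d_comp[OF p a]
  show ?thesis unfolding C2N_def C2e_def
    using c assms unfolding C2N_def C2d_fd[OF c] C2d_fd[OF a]
    by auto
qed

lemma C2N_comp0: assumes p: "C2r p p1 p2" and "C2e f" and z: "\<And>q. q \<in> A \<Longrightarrow> p1 (f (fst q)) = 0"
  shows "C2N A (\<lambda>x. p (f x))"
proof -
  obtain gf Hf where a: "C2d f gf Hf"
    using assms unfolding C2N_def C2e_def by blast
  note c = C2d_comp[OF p a]
  show ?thesis unfolding C2N_def C2e_def
    using c z unfolding C2d_fd[OF c]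
    by auto
qed

lemma C2N_Un: "C2N A f \<Longrightarrow> C2N A' f \<Longrightarrow> C2N (A \<union> A') f"
  unfolding C2N_def by auto

lemma C2N_sum: assumes "finite I" "\<And>i. i \<in> I \<Longrightarrow> C2N A (f i)"
  shows "C2N A (\<lambda>x. \<Sum>i\<in>I. f i x)"
  using assms
proof (induction I rule: finite_induct)
  case empty
  then show ?case using C2N_const[of A 0] by simp
next
  case (insert a I)
  have "C2N A (\<lambda>x. f a x + (\<Sum>i\<in>I. f i x))"
    using insert by (intro C2N_add) auto
  then show ?case using insert by (simp add: sum.insert)
qed

lemma C2N_e: "C2N A f \<Longrightarrow> C2e f" unfolding C2N_def by simp

lemma open_vimage_UNIV: "continuous_on UNIV f \<Longrightarrow> open B \<Longrightarrow> open (f -` B)"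
  using continuous_on_open_vimage[OF open_UNIV] by auto

lemma closed_vimage_UNIV: "continuous_on UNIV f \<Longrightarrow> closed B \<Longrightarrow> closed (f -` B)"
  unfolding closed_def vimage_Compl[symmetric] by (intro open_vimage_UNIV) auto

lemma cover_lemma:
  fixes \<Psi> :: "real^2 \<Rightarrow> real \<times> real"
  assumes c\<Psi>: "continuous_on UNIV \<Psi>" and S: "compact S" and oB: "open B" and BB': "B \<subseteq> B'"
    and inj: "inj_on \<Psi> (S \<inter> \<Psi> -` B')" and K: "compact K" "K \<subseteq> S \<inter> \<Psi> -` B"
    and Oo: "open Op" "K \<subseteq> Op"
  shows "\<exists>T \<delta>. finite T \<and> T \<subseteq> K \<and> (\<forall>q\<in>T. 0 < \<delta> q) \<and> K \<subseteq> (\<Union>q\<in>T. \<Psi> -` ball (\<Psi> q) (\<delta> q)) \<and>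
     (\<forall>q\<in>T. \<forall>y\<in>S. dist (\<Psi> y) (\<Psi> q) < 2 * \<delta> q \<longrightarrow> y \<in> Op) \<and> (\<forall>q\<in>T. cball (\<Psi> q) (2 * \<delta> q) \<subseteq> B)"
proof -
  have "\<forall>q\<in>K. \<exists>d>0. (\<forall>y\<in>S. dist (\<Psi> y) (\<Psi> q) < 2*d \<longrightarrow> y \<in> Op) \<and> cball (\<Psi> q) (2*d) \<subseteq> B"
  proof
    fix q assume q: "q \<in> K"
    then have qS: "q \<in> S" and qB: "\<Psi> q \<in> B" and qO: "q \<in> Op" using K Oo by auto
    obtain \<epsilon> where e: "\<epsilon> > 0" "ball (\<Psi> q) \<epsilon> \<subseteq> B" using oB qB open_contains_ball by blast
    define D where "D = S \<inter> (\<Psi> -` cball (\<Psi> q) (\<epsilon>/2) \<inter> - Op)"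
    have cD: "compact D" unfolding D_def
      by (intro compact_Int_closed S closed_Int closed_vimage_UNIV[OF c\<Psi>] closed_cball)
        (use Oo in auto)
    have "\<exists>m>0. \<forall>y\<in>D. m \<le> dist (\<Psi> y) (\<Psi> q)"
    proof (cases "D = {}")
      case True then show ?thesis by (intro exI[of _ 1]) auto
    next
      case False
      have "continuous_on D (\<lambda>y. dist (\<Psi> y) (\<Psi> q))"
        by (intro continuous_intros continuous_on_subset[OF c\<Psi>]) auto
      then obtain y0 where y0: "y0 \<in> D" "\<forall>y\<in>D. dist (\<Psi> y0) (\<Psi> q) \<le> dist (\<Psi> y) (\<Psi> q)"
        using continuous_attains_inf[OF cD False] by blast
      have y0S: "y0 \<in> S" and y0c: "\<Psi> y0 \<in> cball (\<Psi> q) (\<epsilon>/2)" and y0O: "y0 \<notin> Op"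
        using y0 unfolding D_def by auto
      have "\<Psi> y0 \<in> B" using y0c e by (auto simp: dist_commute)
      then have "\<Psi> y0 \<noteq> \<Psi> q"
        using inj y0S qS qB BB' y0O qO unfolding inj_on_def by blast
      then show ?thesis using y0 by (intro exI[of _ "dist (\<Psi> y0) (\<Psi> q)"]) auto
    qed
    then obtain m where m: "m > 0" "\<forall>y\<in>D. m \<le> dist (\<Psi> y) (\<Psi> q)" by blast
    define d where "d = min (\<epsilon>/8) (m/4)"
    have d: "d > 0" using e m unfolding d_def by auto
    have 1: "y \<in> Op" if "y \<in> S" "dist (\<Psi> y) (\<Psi> q) < 2*d" for y
    proof (rule ccontr)
      assume "y \<notin> Op"
      moreover have "dist (\<Psi> y) (\<Psi> q) \<le> \<epsilon>/2" using that min.cobounded1[of "\<epsilon>/8" "m/4"] e unfolding d_def by linarith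
      ultimately have "y \<in> D" using that unfolding D_def by (auto simp: dist_commute)
      then have "m \<le> dist (\<Psi> y) (\<Psi> q)" using m by auto
      then show False using that m min.cobounded2[of "\<epsilon>/8" "m/4"] unfolding d_def by linarith
    qed
    have 2: "cball (\<Psi> q) (2*d) \<subseteq> B"
    proof
      fix z assume "z \<in> cball (\<Psi> q) (2*d)"
      then have "dist (\<Psi> q) z < \<epsilon>" unfolding d_def using e min.cobounded1[of "\<epsilon>/8" "m/4"] by auto
      then show "z \<in> B" using e by auto
    qed
    show "\<exists>d>0. (\<forall>y\<in>S. dist (\<Psi> y) (\<Psi> q) < 2*d \<longrightarrow> y \<in> Op) \<and> cball (\<Psi> q) (2*d) \<subseteq> B"
      using d 1 2 by blast
  qed
  then obtain \<delta> where \<delta>: "\<forall>q\<in>K. \<delta> q > 0 \<and> (\<forall>y\<in>S. dist (\<Psi> y) (\<Psi> q) < 2*\<delta> q \<longrightarrow> y \<in> Op) \<and> cball (\<Psi> q) (2*\<delta> q) \<subseteq> B"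
    by metis
  have cov: "K \<subseteq> (\<Union>q\<in>K. \<Psi> -` ball (\<Psi> q) (\<delta> q))" using \<delta> by auto
  obtain T where T: "T \<subseteq> K" "finite T" "K \<subseteq> (\<Union>q\<in>T. \<Psi> -` ball (\<Psi> q) (\<delta> q))"
    using compactE_image[OF K(1) _ cov] open_vimage_UNIV[OF c\<Psi> open_ball] by metis
  show ?thesis using T \<delta> by (intro exI[of _ T] exI[of _ \<delta>]) (auto simp: subset_eq)
qed

lemma pow_le_powr:
  fixes f e :: real
  assumes "0 \<le> f" "f \<le> 1" "0 < e" "real k * e \<le> real m" "0 < k"
  shows "f ^ m \<le> (f ^ k) powr e"
proof (cases "f = 0")
  case True
  have "0 < real k * e" using assms by simp
  then have "0 < real m" using assms(4) by linarith
  then show ?thesis using True assms(5) by (simp add: power_0_left)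
next
  case False
  then have fp: "0 < f" using assms by simp
  have "(f ^ k) powr e = f powr (real k * e)"
    using fp by (simp add: powr_powr powr_realpow[symmetric])
  moreover have "f ^ m = f powr (real m)" using fp by (simp add: powr_realpow)
  moreover have "f powr (real m) \<le> f powr (real k * e)"
    using powr_mono'[OF assms(4)] assms by simp
  ultimately show ?thesis by simp
qed

lemma dist_pair_sq: "(dist (a::real, b::real) (c, d))^2 = (a - c)^2 + (b - d)^2"
  by (simp add: dist_Pair_Pair dist_real_def)

lemma main_abstract:
  fixes G :: "(real^2) set" and x0 :: "real^2" and \<Psi>1 \<Psi>2 :: "real^2 \<Rightarrow> real"
    and B B' :: "(real \<times> real) set"
  assumes bG: "bounded G"
    and oB: "open B" and BB': "B \<subseteq> B'"
    and inj: "inj_on (\<lambda>x. (\<Psi>1 x, \<Psi>2 x)) (closure G \<inter> (\<lambda>x. (\<Psi>1 x, \<Psi>2 x)) -` B')"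
    and n1: "C2N {(y, outer_normal G y) | y. y \<in> frontier G \<and> (\<Psi>1 y, \<Psi>2 y) \<in> B} \<Psi>1"
    and n2: "C2N {(y, outer_normal G y) | y. y \<in> frontier G \<and> (\<Psi>1 y, \<Psi>2 y) \<in> B} \<Psi>2"
    and x0: "x0 \<in> closure G" "(\<Psi>1 x0, \<Psi>2 x0) \<in> B"
  shows "\<exists>W. openin (top_of_set (closure G)) W \<and> x0 \<in> W \<and>
    (\<forall>K V \<eta>. compact K \<and> K \<subseteq> W \<and> openin (top_of_set W) V \<and> K \<subseteq> V \<and>
        0 < \<eta> \<and> \<eta> < 1/2 \<longrightarrow>
      (\<exists>\<phi> C. C2_closure G \<phi> \<and> C > 0 \<and>
         (\<forall>x\<in>closure G. 0 \<le> \<phi> x \<and> \<phi> x \<le> 1) \<and>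
         (\<forall>x\<in>closure G - V. \<phi> x = 0) \<and>
         (\<forall>x\<in>K. \<phi> x = 1) \<and>
         (\<forall>x\<in>frontier G. grad \<phi> x \<bullet> outer_normal G x = 0) \<and>
         (\<forall>x\<in>closure G. norm (grad \<phi> x) \<le> C * \<phi> x powr (1 - \<eta>) \<and>
                          \<bar>laplacian \<phi> x\<bar> \<le> C * \<phi> x powr (1 - 2 * \<eta>))))"
proof -
  define \<Psi> where "\<Psi> = (\<lambda>x. (\<Psi>1 x, \<Psi>2 x))"
  define S where "S = closure G"
  define A1 where "A1 = {(y, outer_normal G y) | y. y \<in> frontier G \<and> (\<Psi>1 y, \<Psi>2 y) \<in> B}"
  define A2 where "A2 = {(y, n::real^2) | y n. y \<in> frontier G \<and> (\<Psi>1 y, \<Psi>2 y) \<notin> B}"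
  have N1: "C2N A1 \<Psi>1" and N2: "C2N A1 \<Psi>2" using n1 n2 unfolding A1_def by auto
  have c\<Psi>: "continuous_on UNIV \<Psi>" unfolding \<Psi>_def
    using C2N_e[OF N1] C2N_e[OF N2] unfolding C2e_def
    by (metis C2d_cont_f continuous_on_Pair)
  have cS: "compact S" unfolding S_def using bG compact_closure by blast
  define W where "W = S \<inter> \<Psi> -` B"
  have oW: "openin (top_of_set S) W" unfolding W_def openin_open
    using open_vimage_UNIV[OF c\<Psi> oB] by blast
  have x0W: "x0 \<in> W" unfolding W_def S_def \<Psi>_def using x0 by auto
  show ?thesis
    unfolding S_def[symmetric]
  proof (intro exI[of _ W] conjI oW x0W allI impI)
    fix K V and \<eta> :: real
    assume as: "compact K \<and> K \<subseteq> W \<and> openin (top_of_set W) V \<and> K \<subseteq> V \<and> 0 < \<eta> \<and> \<eta> < 1/2"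
    then have cK: "compact K" and KW: "K \<subseteq> W" and oV: "openin (top_of_set W) V" and KV: "K \<subseteq> V"
      and \<eta>: "0 < \<eta>" "\<eta> < 1/2" by auto
    obtain Op where Op: "open Op" "V = W \<inter> Op" using oV unfolding openin_open by blast
    have KOp: "K \<subseteq> Op" using KV Op by auto
    have inj': "inj_on \<Psi> (S \<inter> \<Psi> -` B')" using inj unfolding \<Psi>_def S_def .
    obtain T \<delta> where T: "finite T" "T \<subseteq> K" "\<forall>q\<in>T. 0 < \<delta> q"
      "K \<subseteq> (\<Union>q\<in>T. \<Psi> -` ball (\<Psi> q) (\<delta> q))"
      "\<forall>q\<in>T. \<forall>y\<in>S. dist (\<Psi> y) (\<Psi> q) < 2 * \<delta> q \<longrightarrow> y \<in> Op"
      "\<forall>q\<in>T. cball (\<Psi> q) (2 * \<delta> q) \<subseteq> B"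
      using cover_lemma[OF c\<Psi> cS oB BB' inj' cK _ Op(1) KOp] KW unfolding W_def by blast
    define Fq where "Fq = (\<lambda>q x. 2 + (- 1 / (\<delta> q)^2) * ((\<Psi>1 x + - \<Psi>1 q)^2 + (\<Psi>2 x + - \<Psi>2 q)^2))"
    have Fq_val: "Fq q x = 2 - (dist (\<Psi> x) (\<Psi> q))^2 / (\<delta> q)^2" for q x
      unfolding Fq_def \<Psi>_def dist_pair_sq by (simp add: field_simps)
    define bq where "bq = (\<lambda>q x. S0 (Fq q x))"
    define f where "f = (\<lambda>x. S0 (\<Sum>q\<in>T. bq q x))"
    define j where "j = nat \<lceil>1/\<eta>\<rceil>"
    define k where "k = Suc (Suc j)"
    define \<phi> where "\<phi> = (\<lambda>x. f x ^ k)"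
    have NF: "C2N A1 (Fq q)" for q
    proof -
      have a: "C2N A1 (\<lambda>x. (\<Psi>1 x + - \<Psi>1 q)^2)"
        using C2N_comp[OF C2r_pow[of 2] C2N_add[OF N1 C2N_const[of _ "- \<Psi>1 q"]]] by simp
      have b: "C2N A1 (\<lambda>x. (\<Psi>2 x + - \<Psi>2 q)^2)"
        using C2N_comp[OF C2r_pow[of 2] C2N_add[OF N2 C2N_const[of _ "- \<Psi>2 q"]]] by simp
      show ?thesis unfolding Fq_def
        by (intro C2N_add[OF C2N_const] C2N_mult[OF C2N_const] C2N_add a b)
    qed
    have Fq_neg: "Fq q y \<le> 0" if "q \<in> T" "2 * \<delta> q \<le> dist (\<Psi> y) (\<Psi> q)" for q y
    proof -
      have dp: "0 < \<delta> q" using T that by auto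
      have "2 * \<delta> q \<le> dist (\<Psi> y) (\<Psi> q)" using that by (auto simp: dist_commute)
      then have "(2 * \<delta> q)^2 \<le> (dist (\<Psi> y) (\<Psi> q))^2"
        using dp by (intro power_mono) auto
      moreover have "2 * (\<delta> q)^2 \<le> (2 * \<delta> q)^2"
        using zero_le_power2[of "\<delta> q"] by (simp add: power_mult_distrib)
      ultimately have "2 * (\<delta> q)^2 \<le> (dist (\<Psi> y) (\<Psi> q))^2" by linarith
      then have "2 \<le> (dist (\<Psi> y) (\<Psi> q))^2 / (\<delta> q)^2" using dp by (simp add: field_simps)
      then show ?thesis unfolding Fq_val by simp
    qed
    have Nb: "C2N (A1 \<union> A2) (bq q)" if "q \<in> T" for q
    proof (rule C2N_Un)
      show "C2N A1 (bq q)" unfolding bq_def by (rule C2N_comp[OF C2r_S0 NF])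
      show "C2N A2 (bq q)" unfolding bq_def
      proof (rule C2N_comp0[OF C2r_S0 C2N_e[OF NF]])
        fix p assume "p \<in> A2"
        then have "\<Psi> (fst p) \<notin> B" unfolding A2_def \<Psi>_def by auto
        then have "\<Psi> (fst p) \<notin> cball (\<Psi> q) (2 * \<delta> q)" using T(6) that by blast
        then have "2 * \<delta> q \<le> dist (\<Psi> (fst p)) (\<Psi> q)" by (simp add: dist_commute)
        then show "S1 (Fq q (fst p)) = 0" using Fq_neg[OF that] S1_le0 by blast
      qed
    qed
    have Nf: "C2N (A1 \<union> A2) f" unfolding f_def
      by (intro C2N_comp[OF C2r_S0] C2N_sum T(1) Nb)
    have Nphi: "C2N (A1 \<union> A2) \<phi>" unfolding \<phi>_def using C2N_comp[OF C2r_pow[of k] Nf] by simp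
    obtain gf Hf where df: "C2d f gf Hf" using C2N_e[OF Nf] unfolding C2e_def by blast
    note dphi0 = C2d_comp[OF C2r_pow[of k] df]
    have dphi: "C2d \<phi> (\<lambda>x. (real k * f x ^ (k - 1)) *\<^sub>R gf x)
       (\<lambda>x i. (real k * real (k - 1) * f x ^ (k - 1 - 1) * gf x $ i) *\<^sub>R gf x + (real k * f x ^ (k - 1)) *\<^sub>R Hf x i)"
      unfolding \<phi>_def using dphi0 .
    have f01: "0 \<le> f x \<and> f x \<le> 1" for x unfolding f_def using S0_range by blast
    have b0: "0 \<le> bq q x" for q x unfolding bq_def using S0_range by blast
    have "bounded (gf ` S)"
      by (intro compact_imp_bounded compact_continuous_image continuous_on_subset[OF C2d_cont_g[OF df]] cS) auto
    then obtain M1 where M1: "M1 > 0" "\<forall>x\<in>S. norm (gf x) \<le> M1"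
      unfolding bounded_pos by auto
    have cH: "continuous_on UNIV (\<lambda>x. \<Sum>i\<in>UNIV. Hf x i $ i)"
      using df unfolding C2d_def by (intro continuous_on_sum continuous_on_component) auto
    have "bounded ((\<lambda>x. \<Sum>i\<in>UNIV. Hf x i $ i) ` S)"
      by (intro compact_imp_bounded compact_continuous_image continuous_on_subset[OF cH] cS) auto
    then obtain M2 where M2: "M2 > 0" "\<forall>x\<in>S. \<bar>\<Sum>i\<in>UNIV. Hf x i $ i\<bar> \<le> M2"
      unfolding bounded_pos by auto
    define C where "C = real k * M1 + real k * real (k - 1) * M1^2 + real k * M2 + 1"
    have Cpos: "C > 0"
    proof -
      have "0 \<le> real k * M1" "0 \<le> real k * real (k - 1) * M1^2" "0 \<le> real k * M2"
        using M1 M2 by auto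
      then show ?thesis unfolding C_def by linarith
    qed
    have jeta: "1 \<le> real j * \<eta>"
    proof -
      have "1/\<eta> \<le> real j" unfolding j_def by linarith
      then show ?thesis using \<eta> by (simp add: field_simps)
    qed
    show "\<exists>\<phi> C. C2_closure G \<phi> \<and> C > 0 \<and>
         (\<forall>x\<in>S. 0 \<le> \<phi> x \<and> \<phi> x \<le> 1) \<and>
         (\<forall>x\<in>S - V. \<phi> x = 0) \<and>
         (\<forall>x\<in>K. \<phi> x = 1) \<and>
         (\<forall>x\<in>frontier G. grad \<phi> x \<bullet> outer_normal G x = 0) \<and>
         (\<forall>x\<in>S. norm (grad \<phi> x) \<le> C * \<phi> x powr (1 - \<eta>) \<and>
                          \<bar>laplacian \<phi> x\<bar> \<le> C * \<phi> x powr (1 - 2 * \<eta>))"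
    proof (intro exI[of _ \<phi>] exI[of _ C] conjI ballI Cpos)
      show "C2_closure G \<phi>" unfolding C2_closure_def
        using C2d_C2_on[OF dphi] by blast
    next
      fix x show "0 \<le> \<phi> x" "\<phi> x \<le> 1" unfolding \<phi>_def using f01[of x]
        by (auto intro: power_le_one)
    next
      fix x assume x: "x \<in> S - V"
      have "bq q x = 0" if q: "q \<in> T" for q
      proof -
        have "2 * \<delta> q \<le> dist (\<Psi> x) (\<Psi> q)"
        proof (cases "x \<in> W")
          case True
          then have "x \<notin> Op" using x Op by auto
          then have "\<not> dist (\<Psi> x) (\<Psi> q) < 2 * \<delta> q" using T(5) q x by blast
          then show ?thesis by simp
        next
          case False
          then have "\<Psi> x \<notin> B" using x unfolding W_def by auto
          then have "\<Psi> x \<notin> cball (\<Psi> q) (2 * \<delta> q)" using T(6) q by blast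
          then show ?thesis by (simp add: dist_commute)
        qed
        then show ?thesis unfolding bq_def using Fq_neg[OF q] S0_le0 by blast
      qed
      then have "f x = 0" unfolding f_def by (simp add: S0_le0)
      then show "\<phi> x = 0" unfolding \<phi>_def k_def by simp
    next
      fix x assume x: "x \<in> K"
      then obtain q where q: "q \<in> T" "dist (\<Psi> x) (\<Psi> q) < \<delta> q" using T(4)
        by (auto simp: dist_commute)
      have dp: "0 < \<delta> q" using T q by auto
      have "(dist (\<Psi> x) (\<Psi> q))^2 < (\<delta> q)^2" using q dp
        by (intro power_strict_mono) auto
      then have "(dist (\<Psi> x) (\<Psi> q))^2 / (\<delta> q)^2 < 1" using dp by (simp add: field_simps)
      then have "1 \<le> Fq q x" unfolding Fq_val by simp
      then have "bq q x = 1" unfolding bq_def using S0_ge1 by blast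
      moreover have "bq q x \<le> (\<Sum>q\<in>T. bq q x)"
        using T(1) q b0 by (intro member_le_sum) auto
      ultimately have "f x = 1" unfolding f_def using S0_ge1 by simp
      then show "\<phi> x = 1" unfolding \<phi>_def by simp
    next
      fix x assume x: "x \<in> frontier G"
      have "(x, outer_normal G x) \<in> A1 \<union> A2" unfolding A1_def A2_def using x by auto
      then have "frechet_derivative \<phi> (at (fst (x, outer_normal G x))) (snd (x, outer_normal G x)) = 0"
        using Nphi unfolding C2N_def by blast
      then have "frechet_derivative \<phi> (at x) (outer_normal G x) = 0" by simp
      then show "grad \<phi> x \<bullet> outer_normal G x = 0"
        unfolding C2d_grad[OF dphi] C2d_fd[OF dphi] .
    next
      fix x assume x: "x \<in> S"
      have fx: "0 \<le> f x" "f x \<le> 1" using f01 by auto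
      have km: "k - 1 = Suc j" "k - 1 - 1 = j" unfolding k_def by auto
      have p1: "f x ^ (k - 1) \<le> \<phi> x powr (1 - \<eta>)"
        unfolding \<phi>_def km using jeta \<eta> fx
        by (intro pow_le_powr) (auto simp: k_def algebra_simps)
      have p2: "f x ^ (k - 1 - 1) \<le> \<phi> x powr (1 - 2 * \<eta>)"
        unfolding \<phi>_def km using jeta \<eta> fx
        by (intro pow_le_powr) (auto simp: k_def algebra_simps)
      have p12: "f x ^ (k - 1) \<le> f x ^ (k - 1 - 1)" unfolding km using fx
        by (simp add: mult_left_le_one_le)
      have g1: "norm (gf x) \<le> M1" using M1 x by auto
      have h1: "\<bar>\<Sum>i\<in>UNIV. Hf x i $ i\<bar> \<le> M2" using M2 x by auto
      have "norm (grad \<phi> x) = real k * f x ^ (k - 1) * norm (gf x)"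
        unfolding C2d_grad[OF dphi] using fx by simp
      also have "\<dots> \<le> real k * f x ^ (k - 1) * M1"
        using g1 fx by (intro mult_left_mono) auto
      also have "\<dots> \<le> C * f x ^ (k - 1)"
        unfolding C_def using M1 M2 fx by (simp add: algebra_simps)
      also have "\<dots> \<le> C * \<phi> x powr (1 - \<eta>)" using p1 Cpos by simp
      finally show "norm (grad \<phi> x) \<le> C * \<phi> x powr (1 - \<eta>)" .
      have lap: "laplacian \<phi> x = real k * real (k - 1) * f x ^ (k - 1 - 1) * (gf x \<bullet> gf x)
          + real k * f x ^ (k - 1) * (\<Sum>i\<in>UNIV. Hf x i $ i)"
        unfolding C2d_lap[OF dphi] inner_vec_def
        by (simp add: sum.distrib sum_distrib_left algebra_simps)
      have gg: "gf x \<bullet> gf x \<le> M1^2" using g1 by (simp add: power_mono norm_ge_zero flip: power2_norm_eq_inner)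
      have ge: "0 \<le> gf x \<bullet> gf x" by simp
      have t1: "\<bar>real k * real (k - 1) * f x ^ (k - 1 - 1) * (gf x \<bullet> gf x)\<bar>
          \<le> real k * real (k - 1) * f x ^ (k - 1 - 1) * M1^2"
        using fx ge gg by (simp add: abs_mult mult_left_mono)
      have t2a: "\<bar>real k * f x ^ (k - 1) * (\<Sum>i\<in>UNIV. Hf x i $ i)\<bar> \<le> real k * f x ^ (k - 1) * M2"
        using fx h1 by (simp add: abs_mult mult_left_mono)
      have t2b: "real k * f x ^ (k - 1) * M2 \<le> real k * f x ^ (k - 1 - 1) * M2"
        using p12 M2 by (intro mult_right_mono mult_left_mono) auto
      have "\<bar>laplacian \<phi> x\<bar> \<le> real k * real (k - 1) * f x ^ (k - 1 - 1) * M1^2 + real k * f x ^ (k - 1 - 1) * M2"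
        unfolding lap using abs_triangle_ineq t1 t2a t2b by (smt (verit))
      also have "\<dots> \<le> C * f x ^ (k - 1 - 1)"
        unfolding C_def using M1 M2 fx by (simp add: algebra_simps)
      also have "\<dots> \<le> C * \<phi> x powr (1 - 2 * \<eta>)" using p2 Cpos by simp
      finally show "\<bar>laplacian \<phi> x\<bar> \<le> C * \<phi> x powr (1 - 2 * \<eta>)" .
    qed
  qed
qed

locale chart =
  fixes G :: "(real^2) set" and p :: "real^2" and r :: real and Q :: "real^2 \<Rightarrow> real^2"
    and h h1 h2 :: "real \<Rightarrow> real"
  assumes oG: "open G" and rpos: "0 < r" and Q: "orthogonal_transformation Q"
    and dh: "\<And>t. (h has_real_derivative h1 t) (at t)"
    and dh1: "\<And>t. (h1 has_real_derivative h2 t) (at t)"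
    and ch2: "continuous_on UNIV h2"
    and chartG: "G \<inter> ball p r = {x \<in> ball p r. (Q (x - p)) $ 2 < h ((Q (x - p)) $ 1)}"
    and pfr: "p \<in> frontier G"
begin

definition a :: "2 \<Rightarrow> real^2" where "a i = inv Q (axis i 1)"
definition Y1 :: "real^2 \<Rightarrow> real" where "Y1 x = (Q (x - p)) $ 1"
definition Y2 :: "real^2 \<Rightarrow> real" where "Y2 x = (Q (x - p)) $ 2"

lemma Q_lin: "linear Q" using Q orthogonal_transformation_linear by blast
lemma Q_surj: "surj Q" using Q orthogonal_transformation_surj by blast
lemma Q_inj: "inj Q" using Q orthogonal_transformation_inj by blast
lemma Q_inner: "Q v \<bullet> Q w = v \<bullet> w" using Q unfolding orthogonal_transformation_def by blast
lemma Q_norm: "norm (Q v) = norm v" using Q orthogonal_transformation_norm by blast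

lemma Q_comp: "(Q z) $ i = a i \<bullet> z"
proof -
  have "(Q z) $ i = Q z \<bullet> axis i 1" by (simp add: inner_axis)
  also have "\<dots> = Q z \<bullet> Q (inv Q (axis i 1))" by (simp add: surj_f_inv_f[OF Q_surj])
  also have "\<dots> = a i \<bullet> z" unfolding a_def Q_inner by (simp add: inner_commute)
  finally show ?thesis .
qed

lemma Y1_lin: "Y1 x = a 1 \<bullet> x + - (a 1 \<bullet> p)"
  unfolding Y1_def Q_comp by (simp add: inner_diff_right)
lemma Y2_lin: "Y2 x = a 2 \<bullet> x + - (a 2 \<bullet> p)"
  unfolding Y2_def Q_comp by (simp add: inner_diff_right)

lemma Y1_eq: "Y1 = (\<lambda>x. a 1 \<bullet> x + - (a 1 \<bullet> p))" using Y1_lin by auto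
lemma Y2_eq: "Y2 = (\<lambda>x. a 2 \<bullet> x + - (a 2 \<bullet> p))" using Y2_lin by auto

lemma C2d_Y1: "C2d Y1 (\<lambda>x. a 1) (\<lambda>x i. 0)" unfolding Y1_eq by (rule C2d_lin)
lemma C2d_Y2: "C2d Y2 (\<lambda>x. a 2) (\<lambda>x i. 0)" unfolding Y2_eq by (rule C2d_lin)

lemma cont_Y1: "continuous_on UNIV Y1" using C2d_cont_f[OF C2d_Y1] .
lemma cont_Y2: "continuous_on UNIV Y2" using C2d_cont_f[OF C2d_Y2] .

lemma cont_h: "continuous_on UNIV h"
  using dh by (intro continuous_at_imp_continuous_on ballI DERIV_isCont) blast
lemma cont_h1: "continuous_on UNIV h1"
  using dh1 by (intro continuous_at_imp_continuous_on ballI DERIV_isCont) blast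

lemma C2r_h: "C2r h h1 h2" unfolding C2r_def using dh dh1 ch2 by blast

lemma chart_mem: "x \<in> ball p r \<Longrightarrow> x \<in> G \<longleftrightarrow> Y2 x < h (Y1 x)"
  using chartG unfolding Y1_def Y2_def by blast

lemma closure_below: assumes "x \<in> closure G" "x \<in> ball p r" shows "Y2 x \<le> h (Y1 x)"
proof -
  have cl: "closed {x. Y2 x \<le> h (Y1 x)}"
  proof -
    have "continuous_on UNIV (\<lambda>x. h (Y1 x) - Y2 x)"
      by (intro continuous_on_diff cont_Y2 continuous_on_compose2[OF cont_h cont_Y1]) auto
    then have "closed ((\<lambda>x. h (Y1 x) - Y2 x) -` {0..})"
      by (intro closed_vimage_UNIV) auto
    moreover have "(\<lambda>x. h (Y1 x) - Y2 x) -` {0..} = {x. Y2 x \<le> h (Y1 x)}" by auto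
    ultimately show ?thesis by simp
  qed
  have "G \<inter> ball p r \<subseteq> {x. Y2 x \<le> h (Y1 x)}" using chart_mem by auto
  then have "closure (ball p r \<inter> G) \<subseteq> {x. Y2 x \<le> h (Y1 x)}"
    using closure_minimal[OF _ cl] by (metis Int_commute)
  moreover have "x \<in> closure (ball p r \<inter> G)"
    using open_Int_closure_subset[OF open_ball, of p r G] assms by auto
  ultimately show ?thesis by auto
qed

lemma frontier_notin: "y \<in> frontier G \<Longrightarrow> y \<notin> G"
  using frontier_disjoint_eq oG by blast

lemma frontier_graph: assumes "y \<in> frontier G" "y \<in> ball p r" shows "Y2 y = h (Y1 y)"
proof -
  have "Y2 y \<le> h (Y1 y)" using closure_below assms frontier_def by (metis Diff_iff)
  moreover have "\<not> Y2 y < h (Y1 y)" using chart_mem[OF assms(2)] frontier_notin[OF assms(1)] by blast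
  ultimately show ?thesis by linarith
qed

lemma Y_p: "Y1 p = 0" "Y2 p = 0" unfolding Y1_def Y2_def using linear_0[OF Q_lin] by auto

lemma h0: "h 0 = 0"
  using frontier_graph[OF pfr] rpos Y_p by simp

lemma graph_frontier: assumes z: "z \<in> ball p r" "Y2 z = h (Y1 z)" shows "z \<in> frontier G"
proof -
  have nG: "z \<notin> G" using chart_mem[OF z(1)] z(2) by simp
  have "z \<in> closure G" unfolding closure_approachable
  proof (intro allI impI)
    fix e :: real assume e: "e > 0"
    define \<rho> where "\<rho> = min (e/2) ((r - dist p z)/2)"
    have zr: "dist p z < r" using z(1) by auto
    have \<rho>: "\<rho> > 0" "\<rho> < e" "\<rho> < r - dist p z" using e zr
      min.cobounded1[of "e/2" "(r - dist p z)/2"] min.cobounded2[of "e/2" "(r - dist p z)/2"]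
      unfolding \<rho>_def by auto
    define v where "v = inv Q (axis 2 1)"
    have Qv: "Q v = axis 2 1" unfolding v_def by (simp add: surj_f_inv_f[OF Q_surj])
    have nv: "norm v = 1" using Q_norm[of v] Qv by simp
    define y where "y = z - \<rho> *\<^sub>R v"
    have dy: "dist y z = \<rho>" unfolding y_def dist_norm using nv \<rho> by simp
    have yb: "y \<in> ball p r"
    proof -
      have "dist p y \<le> dist p z + dist z y" by (rule dist_triangle)
      then show ?thesis using dy \<rho> by (simp add: dist_commute)
    qed
    have Qy: "Q (y - p) = Q (z - p) - \<rho> *\<^sub>R axis 2 1"
      unfolding y_def using Q_lin Qv by (simp add: linear_diff linear_scale linear_add algebra_simps)
    have "Y1 y = Y1 z" "Y2 y = Y2 z - \<rho>" unfolding Y1_def Y2_def Qy by (auto simp: axis_def)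
    then have "y \<in> G" using chart_mem[OF yb] z(2) \<rho> by simp
    then show "\<exists>y\<in>G. dist y z < e" using dy \<rho> by auto
  qed
  then show ?thesis unfolding frontier_def using nG interior_open[OF oG] by auto
qed

end

definition vec2 :: "real \<Rightarrow> real \<Rightarrow> real^2" where "vec2 x y = x *\<^sub>R axis 1 1 + y *\<^sub>R axis 2 1"

lemma vec2_comp [simp]: "vec2 x y $ 1 = x" "vec2 x y $ 2 = y"
  unfolding vec2_def by (auto simp: axis_def)

lemma vec2_eta: "z = vec2 (z $ 1) (z $ 2)"
  unfolding vec_eq_iff using exhaust_2 by (metis vec2_comp)

lemma inner_2: "v \<bullet> w = v $ 1 * w $ 1 + v $ 2 * w $ 2" for v w :: "real^2"
  unfolding inner_vec_def sum_2 by simp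

lemma norm_2: "norm v = sqrt ((v $ 1)^2 + (v $ 2)^2)" for v :: "real^2"
  unfolding norm_eq_sqrt_inner inner_2 by (simp add: power2_eq_square)

context chart
begin

lemma Q_diff: "Q (q - y) = vec2 (Y1 q - Y1 y) (Y2 q - Y2 y)"
proof -
  have "Q (q - y) = Q (q - p) - Q (y - p)" using Q_lin by (simp add: linear_diff[symmetric])
  then show ?thesis by (subst vec2_eta) (simp add: Y1_def Y2_def)
qed

lemma ball_dist: "y \<in> ball p r \<Longrightarrow> 0 < r - dist p y" by auto

lemma normal_exists:
  assumes y: "y \<in> frontier G" "y \<in> ball p r"
  shows "\<exists>n. norm n = 1 \<and>
      ((\<lambda>q. ((q - y) \<bullet> n) / norm (q - y)) \<longlongrightarrow> 0) (at y within frontier G) \<and>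
      (\<exists>e>0. \<forall>t. 0 < t \<and> t < e \<longrightarrow> y - t *\<^sub>R n \<in> G)"
proof -
  define u0 where "u0 = Y1 y"
  define d where "d = h1 u0"
  define c where "c = sqrt (1 + d^2)"
  have c1: "1 \<le> c" unfolding c_def by simp
  have cpos: "0 < c" using c1 by simp
  have csq: "c^2 = 1 + d^2" unfolding c_def by simp
  define m0 where "m0 = vec2 (- d / c) (1 / c)"
  define n0 where "n0 = inv Q m0"
  have Qn0: "Q n0 = m0" unfolding n0_def by (simp add: surj_f_inv_f[OF Q_surj])
  have hy: "Y2 y = h u0" using frontier_graph[OF y] unfolding u0_def .
  have nm0: "norm m0 = 1"
  proof -
    have "(- d / c)^2 + (1/c)^2 = (d^2 + 1) / c^2" by (simp add: power_divide add_divide_distrib)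
    also have "\<dots> = 1"
    proof -
      have "0 < 1 + d^2" by (simp add: add_pos_nonneg)
      then show ?thesis using csq by (simp add: add.commute)
    qed
    finally show ?thesis unfolding m0_def norm_2 by simp
  qed
  have nn0: "norm n0 = 1" using Q_norm[of n0] Qn0 nm0 by simp
  have inn: "(q - y) \<bullet> n0 = ((Y2 q - Y2 y) - d * (Y1 q - Y1 y)) / c" for q
  proof -
    have "(q - y) \<bullet> n0 = Q (q - y) \<bullet> Q n0" by (simp add: Q_inner)
    also have "\<dots> = ((Y2 q - Y2 y) - d * (Y1 q - Y1 y)) / c"
      unfolding Qn0 Q_diff m0_def inner_2 using cpos by (simp add: field_simps)
    finally show ?thesis .
  qed
  have dq: "((\<lambda>z. (h z - h u0) / (z - u0)) \<longlongrightarrow> d) (at u0)"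
    using dh[of u0] unfolding has_field_derivative_iff d_def .
  have tang: "((\<lambda>q. ((q - y) \<bullet> n0) / norm (q - y)) \<longlongrightarrow> 0) (at y within frontier G)"
    unfolding Lim_within
  proof (intro allI impI)
    fix e :: real assume e: "0 < e"
    obtain s where s: "s > 0" "\<forall>z. z \<noteq> u0 \<and> norm (z - u0) < s \<longrightarrow> norm ((h z - h u0) / (z - u0) - d) < e"
      using dq e unfolding LIM_eq by blast
    define \<delta> where "\<delta> = min s (r - dist p y)"
    have \<delta>: "0 < \<delta>" "\<delta> \<le> s" "\<delta> \<le> r - dist p y" using s ball_dist[OF y(2)] unfolding \<delta>_def by auto
    show "\<exists>\<delta>>0. \<forall>q\<in>frontier G. 0 < dist q y \<and> dist q y < \<delta> \<longrightarrow>
        dist (((q - y) \<bullet> n0) / norm (q - y)) 0 < e"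
    proof (intro exI[of _ \<delta>] conjI ballI impI \<delta>(1))
      fix q assume q: "q \<in> frontier G" "0 < dist q y \<and> dist q y < \<delta>"
      have qb: "q \<in> ball p r"
      proof -
        have "dist p q \<le> dist p y + dist y q" by (rule dist_triangle)
        then show ?thesis using q \<delta> by (simp add: dist_commute)
      qed
      have hq: "Y2 q = h (Y1 q)" using frontier_graph[OF q(1) qb] .
      define z where "z = Y1 q"
      have nq: "norm (q - y) = dist q y" by (simp add: dist_norm)
      have zle: "\<bar>z - u0\<bar> \<le> norm (q - y)"
      proof -
        have "\<bar>(Q (q - y)) $ 1\<bar> \<le> norm (Q (q - y))" by (rule component_le_norm_cart)
        then show ?thesis using Q_norm[of "q - y"] unfolding Q_diff z_def u0_def by simp
      qed
      have zne: "z \<noteq> u0"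
      proof
        assume "z = u0"
        then have "Q (q - y) = 0" unfolding Q_diff using hq hy z_def u0_def
          by (simp add: vec_eq_iff forall_2)
        then have "q = y" using Q_inj linear_0[OF Q_lin] by (metis eq_iff_diff_eq_0 injD)
        then show False using q by simp
      qed
      have zs: "norm (z - u0) < s" using zle nq q \<delta> by simp
      define D where "D = (h z - h u0) / (z - u0)"
      have De: "\<bar>D - d\<bar> < e" using s(2) zne zs unfolding D_def by auto
      have zD: "(z - u0) * D = h z - h u0" using zne unfolding D_def by simp
      have "(q - y) \<bullet> n0 = ((h z - h u0) - d * (z - u0)) / c"
        unfolding inn using hq hy by (simp add: z_def u0_def)
      also have "\<dots> = (z - u0) * (D - d) / c" unfolding zD[symmetric] by (simp add: algebra_simps)
      finally have "(q - y) \<bullet> n0 = (z - u0) * (D - d) / c" .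
      then have e1: "\<bar>(q - y) \<bullet> n0\<bar> = \<bar>z - u0\<bar> * \<bar>D - d\<bar> / c"
        using cpos by (simp add: abs_mult abs_divide)
      have e2: "\<bar>z - u0\<bar> * \<bar>D - d\<bar> / c \<le> \<bar>z - u0\<bar> * \<bar>D - d\<bar>"
      proof -
        have "\<bar>z - u0\<bar> * \<bar>D - d\<bar> * 1 \<le> \<bar>z - u0\<bar> * \<bar>D - d\<bar> * c"
          using c1 by (intro mult_left_mono) auto
        then show ?thesis using cpos by (simp add: divide_le_eq)
      qed
      have e3: "\<bar>z - u0\<bar> * \<bar>D - d\<bar> \<le> norm (q - y) * \<bar>D - d\<bar>"
        using zle by (intro mult_right_mono) auto
      have "\<bar>(q - y) \<bullet> n0\<bar> \<le> norm (q - y) * \<bar>D - d\<bar>"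
        using e1 e2 e3 by linarith
      then have "\<bar>(q - y) \<bullet> n0\<bar> / norm (q - y) \<le> \<bar>D - d\<bar>"
        using q nq by (simp add: divide_le_eq mult.commute)
      then show "dist (((q - y) \<bullet> n0) / norm (q - y)) 0 < e"
        using De by (simp add: abs_divide)
    qed
  qed
  have Qt: "Y1 (y - t *\<^sub>R n0) = u0 + t * d / c \<and> Y2 (y - t *\<^sub>R n0) = h u0 - t / c" for t
  proof -
    have "Q (y - t *\<^sub>R n0 - p) = Q (y - p) - t *\<^sub>R m0"
      using Q_lin Qn0 by (simp add: linear_diff linear_scale linear_add algebra_simps)
    then show ?thesis unfolding Y1_def Y2_def m0_def using hy
      by (simp add: u0_def Y1_def Y2_def)
  qed
  have inb: "y - t *\<^sub>R n0 \<in> ball p r" if "0 < t" "t < r - dist p y" for t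
  proof -
    have "dist p (y - t *\<^sub>R n0) \<le> dist p y + dist y (y - t *\<^sub>R n0)" by (rule dist_triangle)
    also have "dist y (y - t *\<^sub>R n0) = t" using nn0 that by (simp add: dist_norm)
    finally show ?thesis using that by simp
  qed
  have inter: "\<exists>e>0. \<forall>t. 0 < t \<and> t < e \<longrightarrow> y - t *\<^sub>R n0 \<in> G"
  proof (cases "d = 0")
    case True
    show ?thesis
    proof (intro exI[of _ "r - dist p y"] conjI allI impI ball_dist[OF y(2)])
      fix t assume t: "0 < t \<and> t < r - dist p y"
      show "y - t *\<^sub>R n0 \<in> G" using chart_mem[OF inb] t Qt[of t] True cpos by simp
    qed
  next
    case False
    then have ad: "0 < \<bar>d\<bar>" by simp
    obtain s where s: "s > 0" "\<forall>z. z \<noteq> u0 \<and> norm (z - u0) < s \<longrightarrow> norm ((h z - h u0) / (z - u0) - d) < 1 / (2 * \<bar>d\<bar>)"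
      using dq ad unfolding LIM_eq by (metis divide_pos_pos mult_pos_pos zero_less_numeral zero_less_one)
    define e where "e = min (r - dist p y) (s * c / \<bar>d\<bar>)"
    have e: "0 < e" "e \<le> r - dist p y" "e \<le> s * c / \<bar>d\<bar>"
      unfolding e_def using ball_dist[OF y(2)] s cpos ad by auto
    show ?thesis
    proof (intro exI[of _ e] conjI allI impI e(1))
      fix t assume t: "0 < t \<and> t < e"
      define k where "k = t * d / c"
      have k0: "k \<noteq> 0" unfolding k_def using t False cpos by simp
      have ak: "\<bar>k\<bar> = t * \<bar>d\<bar> / c" unfolding k_def using t cpos by (simp add: abs_mult abs_divide)
      have ks: "\<bar>k\<bar> < s"
      proof -
        have "t * \<bar>d\<bar> < e * \<bar>d\<bar>" using t ad by (simp add: mult_strict_right_mono)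
        moreover have "e * \<bar>d\<bar> \<le> s * c" using e(3) ad by (simp add: field_simps)
        ultimately have "t * \<bar>d\<bar> < s * c" by linarith
        then show ?thesis unfolding ak using cpos by (simp add: field_simps)
      qed
      define D where "D = (h (u0 + k) - h u0) / k"
      have De: "\<bar>D - d\<bar> < 1 / (2 * \<bar>d\<bar>)" using s(2)[rule_format, of "u0 + k"] k0 ks unfolding D_def by simp
      have hk: "h (u0 + k) - h u0 = k * D" unfolding D_def using k0 by simp
      have "k * D = k * d + k * (D - d)" by (simp add: algebra_simps)
      moreover have "\<bar>k * (D - d)\<bar> \<le> t / (2 * c)"
      proof -
        have "\<bar>k * (D - d)\<bar> = t * \<bar>d\<bar> / c * \<bar>D - d\<bar>" unfolding abs_mult ak by simp
        also have "\<dots> \<le> t * \<bar>d\<bar> / c * (1 / (2 * \<bar>d\<bar>))"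
          using De t cpos by (intro mult_left_mono) auto
        also have "\<dots> = t / (2 * c)" using ad by (simp add: field_simps)
        finally show ?thesis .
      qed
      moreover have "k * d = t * d^2 / c" unfolding k_def by (simp add: power2_eq_square)
      moreover have "0 \<le> t * d^2 / c" using t cpos by simp
      ultimately have "h (u0 + k) - h u0 \<ge> - t / (2 * c)" unfolding hk by linarith
      moreover have "t / (2 * c) < t / c" using t cpos by (simp add: field_simps)
      ultimately have "h u0 - t / c < h (u0 + k)" by linarith
      then show "y - t *\<^sub>R n0 \<in> G" using chart_mem[OF inb] t e(2) Qt[of t] unfolding k_def by simp
    qed
  qed
  show ?thesis using nn0 tang inter by blast
qed

end

context chart
begin

lemma Qa: "Q (a i) = axis i 1" unfolding a_def by (simp add: surj_f_inv_f[OF Q_surj])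

lemma normal_rel:
  assumes y: "y \<in> frontier G" "y \<in> ball p r"
  shows "(Q (outer_normal G y)) $ 1 + h1 (Y1 y) * (Q (outer_normal G y)) $ 2 = 0"
proof -
  define n where "n = outer_normal G y"
  have P: "norm n = 1 \<and> ((\<lambda>q. ((q - y) \<bullet> n) / norm (q - y)) \<longlongrightarrow> 0) (at y within frontier G) \<and>
      (\<exists>e>0. \<forall>t. 0 < t \<and> t < e \<longrightarrow> y - t *\<^sub>R n \<in> G)"
    unfolding n_def outer_normal_def by (rule someI_ex[OF normal_exists[OF y]])
  then have tang: "((\<lambda>q. ((q - y) \<bullet> n) / norm (q - y)) \<longlongrightarrow> 0) (at y within frontier G)" by blast
  define u0 where "u0 = Y1 y"
  define m where "m = Q n"
  define \<Delta> where "\<Delta> = (\<lambda>l. h (u0 + l) - h u0)"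
  define \<gamma> where "\<gamma> = (\<lambda>l. y + (l *\<^sub>R a 1 + \<Delta> l *\<^sub>R a 2))"
  have Q\<gamma>: "Q (\<gamma> l - y) = vec2 l (\<Delta> l)" for l
    unfolding \<gamma>_def vec2_def using Q_lin by (simp add: linear_add linear_scale Qa)
  have Y\<gamma>: "Y1 (\<gamma> l) = u0 + l" "Y2 (\<gamma> l) = h (u0 + l)" for l
  proof -
    have e: "vec2 l (\<Delta> l) = vec2 (Y1 (\<gamma> l) - Y1 y) (Y2 (\<gamma> l) - Y2 y)"
      using Q\<gamma>[of l] Q_diff[of "\<gamma> l" y] by simp
    have hy: "Y2 y = h u0" using frontier_graph[OF y] unfolding u0_def .
    show "Y1 (\<gamma> l) = u0 + l" using arg_cong[OF e, of "\<lambda>v. v $ 1"] unfolding u0_def by simp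
    show "Y2 (\<gamma> l) = h (u0 + l)" using arg_cong[OF e, of "\<lambda>v. v $ 2"] hy unfolding \<Delta>_def by simp
  qed
  have hl: "((\<lambda>l. h (u0 + l)) \<longlongrightarrow> h u0) (at 0)"
    using LIM_offset_zero[OF DERIV_isCont[OF dh[of u0], unfolded isCont_def]] .
  have \<Delta>lim: "(\<Delta> \<longlongrightarrow> 0) (at 0)"
    unfolding \<Delta>_def using tendsto_diff[OF hl tendsto_const[of "h u0"]] by simp
  have \<gamma>lim0: "((\<lambda>l. l *\<^sub>R a 1 + \<Delta> l *\<^sub>R a 2) \<longlongrightarrow> 0 *\<^sub>R a 1 + 0 *\<^sub>R a 2) (at 0)"
    by (intro tendsto_add tendsto_scaleR tendsto_ident_at tendsto_const \<Delta>lim)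
  have \<gamma>lim: "(\<gamma> \<longlongrightarrow> y) (at_right 0)"
  proof -
    have "(\<gamma> \<longlongrightarrow> y + (0 *\<^sub>R a 1 + 0 *\<^sub>R a 2)) (at 0)"
      unfolding \<gamma>_def by (intro tendsto_add tendsto_const \<gamma>lim0)
    then have "(\<gamma> \<longlongrightarrow> y) (at 0)" by simp
    then show ?thesis using filterlim_at_split by blast
  qed
  have evb: "\<forall>\<^sub>F l in at_right 0. \<gamma> l \<in> ball p r"
    using topological_tendstoD[OF \<gamma>lim open_ball y(2)] .
  have ev: "\<forall>\<^sub>F l in at_right 0. \<gamma> l \<in> frontier G - {y}"
    using evb eventually_at_right_less[of "0::real"]
  proof eventually_elim
    case (elim l)
    have "\<gamma> l \<in> frontier G" using graph_frontier[OF elim(1)] Y\<gamma> by simp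
    moreover have "\<gamma> l \<noteq> y"
    proof
      assume "\<gamma> l = y"
      then have "Q (\<gamma> l - y) $ 1 = 0" using linear_0[OF Q_lin] by simp
      then show False using Q\<gamma>[of l] elim(2) by simp
    qed
    ultimately show ?case by simp
  qed
  have filt: "filterlim \<gamma> (at y within frontier G) (at_right 0)"
    by (rule filterlim_at_withinI[OF \<gamma>lim ev])
  have lim1: "((\<lambda>l. ((\<gamma> l - y) \<bullet> n) / norm (\<gamma> l - y)) \<longlongrightarrow> 0) (at_right 0)"
    using filterlim_compose[OF tang filt] .
  define D where "D = (\<lambda>l. \<Delta> l / l)"
  have Dlim: "(D \<longlongrightarrow> h1 u0) (at_right 0)"
  proof -
    have "(D \<longlongrightarrow> h1 u0) (at 0)"
      using dh[of u0] unfolding DERIV_def D_def \<Delta>_def .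
    then show ?thesis using filterlim_at_split by blast
  qed
  have ne: "1 + (h1 u0)^2 \<noteq> 0" using zero_le_power2[of "h1 u0"] by linarith
  define L where "L = (m $ 1 + h1 u0 * m $ 2) / sqrt (1 + (h1 u0)^2)"
  have lim2: "((\<lambda>l. (m $ 1 + D l * m $ 2) / sqrt (1 + (D l)^2)) \<longlongrightarrow> L) (at_right 0)"
    unfolding L_def
    by (intro tendsto_divide tendsto_add tendsto_mult tendsto_const tendsto_real_sqrt tendsto_power Dlim)
      (simp add: ne)
  have eq: "\<forall>\<^sub>F l in at_right 0. (m $ 1 + D l * m $ 2) / sqrt (1 + (D l)^2) = ((\<gamma> l - y) \<bullet> n) / norm (\<gamma> l - y)"
    using eventually_at_right_less[of "0::real"]
  proof eventually_elim
    case (elim l)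
    have i: "(\<gamma> l - y) \<bullet> n = l * m $ 1 + \<Delta> l * m $ 2"
    proof -
      have "(\<gamma> l - y) \<bullet> n = Q (\<gamma> l - y) \<bullet> Q n" by (simp add: Q_inner)
      then show ?thesis unfolding Q\<gamma> m_def[symmetric] inner_2 by simp
    qed
    have nr: "norm (\<gamma> l - y) = sqrt (l^2 + (\<Delta> l)^2)"
      using Q_norm[of "\<gamma> l - y"] unfolding Q\<gamma> norm_2 by simp
    have dl: "\<Delta> l = l * D l" unfolding D_def using elim by simp
    have "sqrt (l^2 + (\<Delta> l)^2) = l * sqrt (1 + (D l)^2)"
    proof -
      have "l^2 + (\<Delta> l)^2 = l^2 * (1 + (D l)^2)" unfolding dl by (simp add: algebra_simps power_mult_distrib)
      then show ?thesis using elim by (simp add: real_sqrt_mult)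
    qed
    then have den: "norm (\<gamma> l - y) = l * sqrt (1 + (D l)^2)" using nr by simp
    have num: "(\<gamma> l - y) \<bullet> n = l * (m $ 1 + D l * m $ 2)" using i dl by (simp add: algebra_simps)
    show ?case unfolding num den using elim by simp
  qed
  have lim3: "((\<lambda>l. ((\<gamma> l - y) \<bullet> n) / norm (\<gamma> l - y)) \<longlongrightarrow> L) (at_right 0)"
    using Lim_transform_eventually[OF lim2 eq] .
  have "L = 0" using tendsto_unique[OF trivial_limit_at_right_real lim3 lim1] .
  moreover have "0 < sqrt (1 + (h1 u0)^2)"
  proof -
    have "0 < 1 + (h1 u0)^2" using zero_le_power2[of "h1 u0"] by linarith
    then show ?thesis by simp
  qed
  ultimately have "m $ 1 + h1 u0 * m $ 2 = 0" unfolding L_def by simp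
  then show ?thesis unfolding m_def n_def u0_def .
qed

end

lemma C2e_const: "C2e (\<lambda>x. c)" unfolding C2e_def using C2d_const by blast
lemma C2e_add: "C2e f \<Longrightarrow> C2e g \<Longrightarrow> C2e (\<lambda>x. f x + g x)" unfolding C2e_def using C2d_add by blast
lemma C2e_mult: "C2e f \<Longrightarrow> C2e g \<Longrightarrow> C2e (\<lambda>x. f x * g x)" unfolding C2e_def using C2d_mult by blast
lemma C2e_comp: "C2r p p1 p2 \<Longrightarrow> C2e f \<Longrightarrow> C2e (\<lambda>x. p (f x))" unfolding C2e_def using C2d_comp by blast

context chart
begin

definition w :: "real \<Rightarrow> real" where "w v = h1 v / (1 + (h1 v)^2)"
definition wd :: "real \<Rightarrow> real" where "wd v = h2 v * (1 - (h1 v)^2) / (1 + (h1 v)^2)^2"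

lemma pos1: "0 < 1 + (x::real)^2" using zero_le_power2[of x] by linarith

lemma w_deriv: "(w has_real_derivative wd v) (at v)"
proof -
  have g: "((\<lambda>v. 1 + (h1 v)^2) has_real_derivative (0 + 2 * h1 v * h2 v)) (at v)"
    using DERIV_add[OF DERIV_const DERIV_pow[of 2, THEN DERIV_chain2, OF dh1]]
    by (simp add: power2_eq_square algebra_simps)
  have "(w has_real_derivative (h2 v * (1 + (h1 v)^2) - (0 + 2 * h1 v * h2 v) * h1 v) / (1 + (h1 v)^2)^Suc (Suc 0)) (at v)"
    unfolding w_def[abs_def] using DERIV_quotient[OF dh1 g] pos1[of "h1 v"] by simp
  moreover have "(h2 v * (1 + (h1 v)^2) - (0 + 2 * h1 v * h2 v) * h1 v) / (1 + (h1 v)^2)^Suc (Suc 0) = wd v"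
    unfolding wd_def by (simp add: power2_eq_square algebra_simps)
  ultimately show ?thesis by simp
qed

lemma cont_w: "continuous_on UNIV w"
  using w_deriv by (intro continuous_at_imp_continuous_on ballI DERIV_isCont) blast

lemma nz1: "1 + (x::real)^2 \<noteq> 0" using pos1[of x] by linarith

lemma cont_wd: "continuous_on UNIV wd"
  unfolding wd_def
  by (intro continuous_intros ch2 cont_h1) (simp add: nz1)

lemma w_bound: "\<bar>w v\<bar> \<le> 1/2"
proof -
  have "2 * \<bar>h1 v\<bar> \<le> 1 + (h1 v)^2"
    using zero_le_power2[of "\<bar>h1 v\<bar> - 1"] by (simp add: power2_eq_square algebra_simps)
  then show ?thesis unfolding w_def using pos1[of "h1 v"] by (simp add: abs_divide field_simps)
qed

lemma W_ex: "\<exists>F. \<forall>x. (F has_real_derivative w x) (at x)"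
proof -
  have "\<exists>F. \<forall>x::real. -\<infinity> < ereal x \<longrightarrow> ereal x < \<infinity> \<longrightarrow> (F has_vector_derivative w x) (at x)"
    by (rule einterval_antiderivative) (use cont_w in \<open>auto simp: continuous_on_eq_continuous_at\<close>)
  then show ?thesis by (auto simp: has_real_derivative_iff_has_vector_derivative)
qed

definition W :: "real \<Rightarrow> real" where "W = (SOME F. \<forall>x. (F has_real_derivative w x) (at x))"

lemma W_deriv: "(W has_real_derivative w x) (at x)"
  using someI_ex[OF W_ex] unfolding W_def by blast

lemma C2r_W: "C2r W w wd" unfolding C2r_def using W_deriv w_deriv cont_wd by blast

definition tt :: "real^2 \<Rightarrow> real" where "tt x = Y2 x + (-1) * h (Y1 x)"
definition ss :: "real^2 \<Rightarrow> real" where "ss x = Y1 x + (W (Y1 x + tt x) + (-1) * W (Y1 x))"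

lemma C2e_Y1: "C2e Y1" unfolding C2e_def using C2d_Y1 by blast
lemma C2e_Y2: "C2e Y2" unfolding C2e_def using C2d_Y2 by blast

lemma C2e_tt: "C2e tt"
  unfolding tt_def[abs_def]
  by (intro C2e_add C2e_Y2 C2e_mult C2e_const C2e_comp[OF C2r_h C2e_Y1])

lemma C2e_ss: "C2e ss"
  unfolding ss_def[abs_def]
  by (intro C2e_add C2e_Y1 C2e_mult C2e_const C2e_comp[OF C2r_W] C2e_tt)

lemma C2e_tt2: "C2e (\<lambda>x. tt x * tt x)" by (intro C2e_mult C2e_tt)

lemma d_Y1: "(Y1 has_derivative (\<lambda>v. a 1 \<bullet> v)) (at y)" using C2d_Y1 unfolding C2d_def by blast
lemma d_Y2: "(Y2 has_derivative (\<lambda>v. a 2 \<bullet> v)) (at y)" using C2d_Y2 unfolding C2d_def by blast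

lemma d_tt: "(tt has_derivative (\<lambda>v. a 2 \<bullet> v + (-1) * ((a 1 \<bullet> v) * h1 (Y1 y)))) (at y)"
  unfolding tt_def[abs_def]
  by (intro has_derivative_add d_Y2 has_derivative_mult_right DERIV_compose_FDERIV[OF dh d_Y1])

lemma d_ss: "(ss has_derivative (\<lambda>v. a 1 \<bullet> v + ((a 1 \<bullet> v + (a 2 \<bullet> v + (-1) * ((a 1 \<bullet> v) * h1 (Y1 y)))) * w (Y1 y + tt y)
     + (-1) * ((a 1 \<bullet> v) * w (Y1 y))))) (at y)"
  unfolding ss_def[abs_def]
  by (intro has_derivative_add d_Y1 has_derivative_mult_right DERIV_compose_FDERIV[OF W_deriv]
      has_derivative_add d_tt DERIV_compose_FDERIV[OF W_deriv d_Y1])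

lemma neumann_ss:
  assumes y: "y \<in> frontier G" "y \<in> ball p r"
  shows "frechet_derivative ss (at y) (outer_normal G y) = 0"
proof -
  define n where "n = outer_normal G y"
  define m1 where "m1 = (Q n) $ 1"
  define m2 where "m2 = (Q n) $ 2"
  define d where "d = h1 (Y1 y)"
  have rel: "m1 = - d * m2" using normal_rel[OF y] unfolding m1_def m2_def d_def n_def by simp
  have t0: "tt y = 0" using frontier_graph[OF y] unfolding tt_def by simp
  have an: "a 1 \<bullet> n = m1" "a 2 \<bullet> n = m2" unfolding m1_def m2_def Q_comp by auto
  have E: "(\<lambda>v. a 1 \<bullet> v + ((a 1 \<bullet> v + (a 2 \<bullet> v + (-1) * ((a 1 \<bullet> v) * h1 (Y1 y)))) * w (Y1 y + tt y)
     + (-1) * ((a 1 \<bullet> v) * w (Y1 y)))) = frechet_derivative ss (at y)"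
    by (rule frechet_derivative_at[OF d_ss])
  have fd: "frechet_derivative ss (at y) n = m1 + ((m1 + (m2 + (-1) * (m1 * d))) * w (Y1 y) + (-1) * (m1 * w (Y1 y)))"
    unfolding E[symmetric] an t0 d_def by simp
  have wd: "w (Y1 y) * (1 + d^2) = d" unfolding w_def d_def using pos1[of "h1 (Y1 y)"] by simp
  have "m1 + ((m1 + (m2 + (-1) * (m1 * d))) * w (Y1 y) + (-1) * (m1 * w (Y1 y))) = m2 * (w (Y1 y) * (1 + d^2) - d)"
    unfolding rel by (simp add: algebra_simps power2_eq_square)
  then show ?thesis using fd wd unfolding n_def by simp
qed

lemma neumann_tt2:
  assumes y: "y \<in> frontier G" "y \<in> ball p r"
  shows "frechet_derivative (\<lambda>x. tt x * tt x) (at y) v = 0"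
proof -
  have t0: "tt y = 0" using frontier_graph[OF y] unfolding tt_def by simp
  have "((\<lambda>x. tt x * tt x) has_derivative (\<lambda>v. tt y * (a 2 \<bullet> v + (-1) * ((a 1 \<bullet> v) * h1 (Y1 y))) + (a 2 \<bullet> v + (-1) * ((a 1 \<bullet> v) * h1 (Y1 y))) * tt y)) (at y)"
    by (intro has_derivative_mult d_tt)
  note E = frechet_derivative_at[OF this]
  show ?thesis unfolding E[symmetric] t0 by simp
qed

end

context chart
begin

lemma Wdiff: "\<bar>W (u + \<tau>) - W u\<bar> \<le> \<bar>\<tau>\<bar> / 2"
proof -
  consider "\<tau> = 0" | "\<tau> > 0" | "\<tau> < 0" by linarith
  then show ?thesis
  proof cases
    case 1 then show ?thesis by simp
  next
    case 2
    obtain z where z: "W (u + \<tau>) - W u = (u + \<tau> - u) * w z"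
      using MVT2[of u "u + \<tau>" W w] W_deriv 2 by auto
    have "\<bar>W (u + \<tau>) - W u\<bar> = \<tau> * \<bar>w z\<bar>" using z 2 by (simp add: abs_mult)
    also have "\<dots> \<le> \<tau> * (1/2)" using w_bound[of z] 2 by (intro mult_left_mono) auto
    finally show ?thesis using 2 by simp
  next
    case 3
    obtain z where z: "W u - W (u + \<tau>) = (u - (u + \<tau>)) * w z"
      using MVT2[of "u + \<tau>" u W w] W_deriv 3 by auto
    have "\<bar>W (u + \<tau>) - W u\<bar> = (- \<tau>) * \<bar>w z\<bar>" using z 3
      by (simp add: abs_mult abs_minus_commute)
    also have "\<dots> \<le> (- \<tau>) * (1/2)" using w_bound[of z] 3 by (intro mult_left_mono) auto
    finally show ?thesis using 3 by simp
  qed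
qed

lemma cont_at0:
  fixes f :: "real \<Rightarrow> real"
  assumes "continuous_on UNIV f" "e > 0"
  shows "\<exists>c>0. \<forall>v. \<bar>v\<bar> < c \<longrightarrow> \<bar>f v - f 0\<bar> < e"
proof -
  have "(f \<longlongrightarrow> f 0) (at 0)" using assms(1) by (simp add: continuous_on_eq_continuous_at isCont_def)
  then obtain s where s: "s > 0" "\<forall>x. x \<noteq> 0 \<and> norm (x - 0) < s \<longrightarrow> norm (f x - f 0) < e"
    using assms(2) unfolding LIM_eq by blast
  show ?thesis
  proof (intro exI[of _ s] conjI allI impI s(1))
    fix v :: real assume "\<bar>v\<bar> < s"
    then show "\<bar>f v - f 0\<bar> < e" using s assms(2) by (cases "v = 0") auto
  qed
qed

lemma g_mono:
  assumes c2: "\<forall>v. \<bar>v\<bar> < c2 \<longrightarrow> \<bar>w v - w 0\<bar> < 1/4"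
    and v: "v1 < v2" "\<bar>v1\<bar> \<le> b" "\<bar>v2\<bar> \<le> b" "\<bar>\<tau>\<bar> \<le> b'" "b + b' < c2"
  shows "v1 + (W (v1 + \<tau>) + (-1) * W v1) < v2 + (W (v2 + \<tau>) + (-1) * W v2)"
proof (rule DERIV_pos_imp_increasing[OF v(1)])
  fix x assume x: "v1 \<le> x" "x \<le> v2"
  have d: "((\<lambda>v. v + (W (v + \<tau>) + (-1) * W v)) has_real_derivative 1 + (w (x + \<tau>) * 1 + (-1) * w x)) (at x)"
    by (intro DERIV_add DERIV_ident DERIV_cmult DERIV_chain2[OF W_deriv] W_deriv DERIV_const)
      (use DERIV_add[OF DERIV_ident DERIV_const[of \<tau>]] in simp)
  have "\<bar>x\<bar> \<le> b" using x v by linarith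
  then have "\<bar>x\<bar> < c2" using v by linarith
  then have a1: "\<bar>w x - w 0\<bar> < 1/4" using c2 by blast
  have "\<bar>x + \<tau>\<bar> < c2" using \<open>\<bar>x\<bar> \<le> b\<close> v by linarith
  then have a2: "\<bar>w (x + \<tau>) - w 0\<bar> < 1/4" using c2 by blast
  have "1 + (w (x + \<tau>) * 1 + (-1) * w x) > 0" using a1 a2 by linarith
  then show "\<exists>y. ((\<lambda>v. v + (W (v + \<tau>) + (-1) * W v)) has_real_derivative y) (at x) \<and> 0 < y"
    using d by blast
qed

end

context chart
begin

lemma boundary_result:
  assumes bG: "bounded G"
  shows "\<exists>W. openin (top_of_set (closure G)) W \<and> p \<in> W \<and>
    (\<forall>K V \<eta>. compact K \<and> K \<subseteq> W \<and> openin (top_of_set W) V \<and> K \<subseteq> V \<and>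
        0 < \<eta> \<and> \<eta> < 1/2 \<longrightarrow>
      (\<exists>\<phi> C. C2_closure G \<phi> \<and> C > 0 \<and>
         (\<forall>x\<in>closure G. 0 \<le> \<phi> x \<and> \<phi> x \<le> 1) \<and>
         (\<forall>x\<in>closure G - V. \<phi> x = 0) \<and>
         (\<forall>x\<in>K. \<phi> x = 1) \<and>
         (\<forall>x\<in>frontier G. grad \<phi> x \<bullet> outer_normal G x = 0) \<and>
         (\<forall>x\<in>closure G. norm (grad \<phi> x) \<le> C * \<phi> x powr (1 - \<eta>) \<and>
                          \<bar>laplacian \<phi> x\<bar> \<le> C * \<phi> x powr (1 - 2 * \<eta>))))"
proof -
  have r4: "r/4 > 0" using rpos by simp
  obtain c1 where c1: "c1 > 0" "\<forall>v. \<bar>v\<bar> < c1 \<longrightarrow> \<bar>h v - h 0\<bar> < r/4"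
    using cont_at0[OF cont_h r4] by blast
  obtain c2 where c2: "c2 > 0" "\<forall>v. \<bar>v\<bar> < c2 \<longrightarrow> \<bar>w v - w 0\<bar> < 1/4"
    using cont_at0[OF cont_w, of "1/4"] by auto
  define \<alpha> where "\<alpha> = min (min (c1/4) (c2/4)) (min (r/8) 1)"
  have \<alpha>: "0 < \<alpha>" "\<alpha> \<le> c1/4" "\<alpha> \<le> c2/4" "\<alpha> \<le> r/8" "\<alpha> \<le> 1"
    unfolding \<alpha>_def using c1 c2 rpos by auto
  define B :: "(real \<times> real) set" where "B = {z. \<bar>fst z\<bar> < \<alpha> \<and> \<bar>snd z\<bar> < \<alpha>^2}"
  define B' :: "(real \<times> real) set" where "B' = {z. \<bar>fst z\<bar> \<le> \<alpha> \<and> \<bar>snd z\<bar> \<le> \<alpha>^2}"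
  have BB': "B \<subseteq> B'" unfolding B_def B'_def by auto
  have oB: "open B"
  proof -
    have "B = {-\<alpha><..<\<alpha>} \<times> {-(\<alpha>^2)<..<\<alpha>^2}" unfolding B_def by (auto simp: abs_less_iff)
    then show ?thesis by (simp add: open_Times)
  qed
  have region: "x \<in> ball p r \<and> \<bar>tt x\<bar> \<le> \<alpha> \<and> \<bar>Y1 x\<bar> \<le> 3 * \<alpha> / 2"
    if x: "(ss x, tt x * tt x) \<in> B'" for x
  proof -
    have s: "\<bar>ss x\<bar> \<le> \<alpha>" and t2: "\<bar>tt x * tt x\<bar> \<le> \<alpha>^2" using x unfolding B'_def by auto
    have "(tt x)^2 \<le> \<alpha>^2" using t2 by (simp add: power2_eq_square)
    then have t: "\<bar>tt x\<bar> \<le> \<alpha>" using abs_le_square_iff[of "tt x" \<alpha>] \<alpha> by simp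
    have "\<bar>W (Y1 x + tt x) - W (Y1 x)\<bar> \<le> \<bar>tt x\<bar> / 2" by (rule Wdiff)
    moreover have "Y1 x = ss x - (W (Y1 x + tt x) - W (Y1 x))" unfolding ss_def by simp
    ultimately have u: "\<bar>Y1 x\<bar> \<le> 3 * \<alpha> / 2" using s t by linarith
    have "\<bar>Y1 x\<bar> < c1" using u \<alpha> c1 by linarith
    then have hu: "\<bar>h (Y1 x)\<bar> < r/4" using c1 h0 by auto
    have "Y2 x = tt x + h (Y1 x)" unfolding tt_def by simp
    then have v: "\<bar>Y2 x\<bar> < \<alpha> + r/4" using t hu by linarith
    have "norm (x - p) = norm (Q (x - p))" by (simp add: Q_norm)
    also have "\<dots> \<le> (\<Sum>i\<in>UNIV. \<bar>Q (x - p) $ i\<bar>)" by (rule norm_le_l1_cart)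
    also have "\<dots> = \<bar>Y1 x\<bar> + \<bar>Y2 x\<bar>" unfolding sum_2 Y1_def Y2_def by simp
    finally have "norm (x - p) < r" using u v \<alpha> by linarith
    then have "x \<in> ball p r" by (simp add: dist_norm norm_minus_commute)
    then show ?thesis using t u by simp
  qed
  have inj: "inj_on (\<lambda>x. (ss x, tt x * tt x)) (closure G \<inter> (\<lambda>x. (ss x, tt x * tt x)) -` B')"
  proof (rule inj_onI)
    fix x x' assume xs: "x \<in> closure G \<inter> (\<lambda>x. (ss x, tt x * tt x)) -` B'"
      and xs': "x' \<in> closure G \<inter> (\<lambda>x. (ss x, tt x * tt x)) -` B'"
      and eq: "(ss x, tt x * tt x) = (ss x', tt x' * tt x')"
    have R: "x \<in> ball p r" "\<bar>tt x\<bar> \<le> \<alpha>" "\<bar>Y1 x\<bar> \<le> 3 * \<alpha> / 2" using region xs by auto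
    have R': "x' \<in> ball p r" "\<bar>tt x'\<bar> \<le> \<alpha>" "\<bar>Y1 x'\<bar> \<le> 3 * \<alpha> / 2" using region xs' by auto
    have neg: "tt x \<le> 0" "tt x' \<le> 0"
      using closure_below[of x] closure_below[of x'] R(1) R'(1) xs xs' unfolding tt_def by auto
    have "tt x = tt x' \<or> tt x = - tt x'" using eq square_eq_iff by auto
    then have tq: "tt x = tt x'" using neg by auto
    have se: "Y1 x + (W (Y1 x + tt x) + (-1) * W (Y1 x)) = Y1 x' + (W (Y1 x' + tt x) + (-1) * W (Y1 x'))"
      using eq tq unfolding ss_def by simp
    have bb: "3 * \<alpha> / 2 + \<alpha> < c2" using \<alpha> c2 by linarith
    have uq: "Y1 x = Y1 x'"
    proof (rule ccontr)
      assume "Y1 x \<noteq> Y1 x'"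
      then consider "Y1 x < Y1 x'" | "Y1 x' < Y1 x" by linarith
      then show False
      proof cases
        case 1
        from g_mono[OF c2(2) 1 R(3) R'(3) R(2) bb] se show False by simp
      next
        case 2
        from g_mono[OF c2(2) 2 R'(3) R(3) R(2) bb] se show False by simp
      qed
    qed
    have "Y2 x = Y2 x'" using tq uq unfolding tt_def by simp
    then have "Q (x - p) = Q (x' - p)" using uq unfolding Y1_def Y2_def
      by (subst vec2_eta, subst (2) vec2_eta) simp
    then have "x - p = x' - p" using Q_inj by (simp add: inj_eq)
    then show "x = x'" by simp
  qed
  have n1: "C2N {(y, outer_normal G y) | y. y \<in> frontier G \<and> (ss y, tt y * tt y) \<in> B} ss"
    unfolding C2N_def
  proof (intro conjI C2e_ss ballI)
    fix q assume "q \<in> {(y, outer_normal G y) | y. y \<in> frontier G \<and> (ss y, tt y * tt y) \<in> B}"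
    then obtain y where y: "q = (y, outer_normal G y)" "y \<in> frontier G" "(ss y, tt y * tt y) \<in> B" by blast
    have "y \<in> ball p r" using region[of y] y(3) BB' by auto
    then show "frechet_derivative ss (at (fst q)) (snd q) = 0" using neumann_ss[OF y(2)] y(1) by simp
  qed
  have n2: "C2N {(y, outer_normal G y) | y. y \<in> frontier G \<and> (ss y, tt y * tt y) \<in> B} (\<lambda>x. tt x * tt x)"
    unfolding C2N_def
  proof (intro conjI C2e_tt2 ballI)
    fix q assume "q \<in> {(y, outer_normal G y) | y. y \<in> frontier G \<and> (ss y, tt y * tt y) \<in> B}"
    then obtain y where y: "q = (y, outer_normal G y)" "y \<in> frontier G" "(ss y, tt y * tt y) \<in> B" by blast
    have "y \<in> ball p r" using region[of y] y(3) BB' by auto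
    then show "frechet_derivative (\<lambda>x. tt x * tt x) (at (fst q)) (snd q) = 0"
      using neumann_tt2[OF y(2)] y(1) by simp
  qed
  have pc: "p \<in> closure G" using pfr unfolding frontier_def by auto
  have tp: "tt p = 0" unfolding tt_def using Y_p h0 by simp
  have sp: "ss p = 0" unfolding ss_def using Y_p tp by simp
  have pB: "(ss p, tt p * tt p) \<in> B" unfolding B_def using sp tp \<alpha> by simp
  show ?thesis by (rule main_abstract[OF bG oB BB' inj n1 n2 pc pB])
qed

end

lemma C2e_comp1: "C2e (\<lambda>x::real^2. x $ i)"
proof -
  have "(\<lambda>x::real^2. x $ i) = (\<lambda>x. axis i 1 \<bullet> x + 0)" by (simp add: inner_axis')
  then show ?thesis unfolding C2e_def using C2d_lin by metis
qed

lemma interior_result: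
  fixes G :: "(real^2) set" and x0 :: "real^2"
  assumes bG: "bounded G" and oG: "open G" and x0: "x0 \<in> G"
  shows "\<exists>W. openin (top_of_set (closure G)) W \<and> x0 \<in> W \<and>
    (\<forall>K V \<eta>. compact K \<and> K \<subseteq> W \<and> openin (top_of_set W) V \<and> K \<subseteq> V \<and>
        0 < \<eta> \<and> \<eta> < 1/2 \<longrightarrow>
      (\<exists>\<phi> C. C2_closure G \<phi> \<and> C > 0 \<and>
         (\<forall>x\<in>closure G. 0 \<le> \<phi> x \<and> \<phi> x \<le> 1) \<and>
         (\<forall>x\<in>closure G - V. \<phi> x = 0) \<and>
         (\<forall>x\<in>K. \<phi> x = 1) \<and>
         (\<forall>x\<in>frontier G. grad \<phi> x \<bullet> outer_normal G x = 0) \<and>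
         (\<forall>x\<in>closure G. norm (grad \<phi> x) \<le> C * \<phi> x powr (1 - \<eta>) \<and>
                          \<bar>laplacian \<phi> x\<bar> \<le> C * \<phi> x powr (1 - 2 * \<eta>))))"
proof -
  obtain \<epsilon> where \<epsilon>: "\<epsilon> > 0" "ball x0 \<epsilon> \<subseteq> G" using oG x0 open_contains_ball by blast
  define \<rho> where "\<rho> = \<epsilon> / 2"
  define B :: "(real \<times> real) set" where "B = {z. \<bar>fst z - x0 $ 1\<bar> < \<rho> \<and> \<bar>snd z - x0 $ 2\<bar> < \<rho>}"
  have oB: "open B"
  proof -
    have "B = {x0 $ 1 - \<rho><..<x0 $ 1 + \<rho>} \<times> {x0 $ 2 - \<rho><..<x0 $ 2 + \<rho>}"
      unfolding B_def by (auto simp: abs_less_iff)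
    then show ?thesis by (simp add: open_Times)
  qed
  have inG: "x \<in> G" if "(x $ 1, x $ 2) \<in> B" for x
  proof -
    have "norm (x - x0) \<le> (\<Sum>i\<in>UNIV. \<bar>(x - x0) $ i\<bar>)" by (rule norm_le_l1_cart)
    also have "\<dots> = \<bar>x $ 1 - x0 $ 1\<bar> + \<bar>x $ 2 - x0 $ 2\<bar>" unfolding sum_2 by simp
    finally have "norm (x - x0) < \<epsilon>" using that unfolding B_def \<rho>_def by auto
    then have "x \<in> ball x0 \<epsilon>" by (simp add: dist_norm norm_minus_commute)
    then show ?thesis using \<epsilon> by auto
  qed
  have inj: "inj_on (\<lambda>x::real^2. (x $ 1, x $ 2)) (closure G \<inter> (\<lambda>x. (x $ 1, x $ 2)) -` UNIV)"
  proof (rule inj_onI)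
    fix x y :: "real^2" assume "(x $ 1, x $ 2) = (y $ 1, y $ 2)"
    then show "x = y" by (subst vec2_eta, subst (2) vec2_eta) simp
  qed
  have emp: "{(y, outer_normal G y) | y. y \<in> frontier G \<and> (y $ 1, y $ 2) \<in> B} = {}"
    using inG frontier_disjoint_eq oG by blast
  have n1: "C2N {(y, outer_normal G y) | y. y \<in> frontier G \<and> (y $ 1, y $ 2) \<in> B} (\<lambda>x. x $ 1)"
    unfolding emp C2N_def using C2e_comp1 by blast
  have n2: "C2N {(y, outer_normal G y) | y. y \<in> frontier G \<and> (y $ 1, y $ 2) \<in> B} (\<lambda>x. x $ 2)"
    unfolding emp C2N_def using C2e_comp1 by blast
  have xc: "x0 \<in> closure G" using x0 closure_subset by blast
  have xB: "(x0 $ 1, x0 $ 2) \<in> B" unfolding B_def \<rho>_def using \<epsilon> by simp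
  show ?thesis
    by (rule main_abstract[OF bG oB subset_UNIV inj n1 n2 xc xB])
qed

theorem lemma3p3:
  fixes G :: "(real^2) set" and x0 :: "real^2"
  assumes "C2_domain G" and "bounded G" and "x0 \<in> closure G"
  shows "\<exists>W. openin (top_of_set (closure G)) W \<and> x0 \<in> W \<and>
    (\<forall>K V \<eta>. compact K \<and> K \<subseteq> W \<and> openin (top_of_set W) V \<and> K \<subseteq> V \<and>
        0 < \<eta> \<and> \<eta> < 1/2 \<longrightarrow>
      (\<exists>\<phi> C. C2_closure G \<phi> \<and> C > 0 \<and>
         (\<forall>x\<in>closure G. 0 \<le> \<phi> x \<and> \<phi> x \<le> 1) \<and>
         (\<forall>x\<in>closure G - V. \<phi> x = 0) \<and>
         (\<forall>x\<in>K. \<phi> x = 1) \<and>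
         (\<forall>x\<in>frontier G. grad \<phi> x \<bullet> outer_normal G x = 0) \<and>
         (\<forall>x\<in>closure G. norm (grad \<phi> x) \<le> C * \<phi> x powr (1 - \<eta>) \<and>
                          \<bar>laplacian \<phi> x\<bar> \<le> C * \<phi> x powr (1 - 2 * \<eta>))))"
proof (cases "x0 \<in> G")
  case True
  have "open G" using assms(1) unfolding C2_domain_def by blast
  then show ?thesis using interior_result[OF assms(2) _ True] by blast
next
  case False
  have oG: "open G" using assms(1) unfolding C2_domain_def by blast
  have fr: "x0 \<in> frontier G" using False assms(3) interior_open[OF oG] unfolding frontier_def by auto
  then obtain r and Q :: "real^2 \<Rightarrow> real^2" and h where rQh: "r > 0" "orthogonal_transformation Q" "C2_real h"
      "G \<inter> ball x0 r = {x \<in> ball x0 r. (Q (x - x0)) $ 2 < h ((Q (x - x0)) $ 1)}"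
    using assms(1) unfolding C2_domain_def by blast
  obtain h1 h2 where hh: "\<And>t. (h has_real_derivative h1 t) (at t)" "\<And>t. (h1 has_real_derivative h2 t) (at t)"
    "continuous_on UNIV h2"
    using rQh(3) unfolding C2_real_def by blast
  interpret chart G x0 r Q h h1 h2
    by (unfold_locales) (use oG rQh hh fr in auto)
  show ?thesis using boundary_result[OF assms(2)] .
qed

end
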